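(* For the fully labeled two-dimensional rearrangement problem (LTR) with a uniformly random initial permutation, SweepCyclesLTR and SwitchCyclesLTR compute globally optimal solutions in the asymptotic sense for the total cost $J_T(P)=Nc_p+\sum_{i=0}^N\|p_i-p_{i+1}\|_2\,c_t$ (fixed constants $c_p,c_t>0$): the ratio of the expected total cost of the plan returned by either algorithm to the expected minimum of $J_T$ over all valid plans tends to $1$ as the number of items $m_1m_2\to\infty$.
   Context: Setting (LTR). An $m_1\times m_2$ lattice (rows $\times$ columns); the cell in row $r$ and column $c$ is located at $(r,c)\in\mathbb R^2$ and labeled $(c-1)m_1+r$. Each cell initially holds one item; items carry distinct labels $1,\dots,m_1m_2$. An instance is a permutation $\pi$ of $\{1,\dots,m_1m_2\}$, $\pi_i$ being the label of the item initially in cell $i$; the goal is that item $j$ ends in cell $j$. A robot end-effector holds at most one item and starts at the top-left cell $p_0$ holding nothing. A pick-n-swap at a cell $p$: if holding nothing, pick up the item in $p$; if holding an item and $p$ contains an item, exchange them; if holding an item and $p$ is empty, put it into $p$. A plan is a sequence of cells $P=(p_0,\dots,p_N)$ visited in order with a pick-n-swap at each $p_1,\dots,p_N$, then a return to $p_{N+1}:=p_0$; it is valid if at the end every item is at its goal and nothing is held; $N$ is its number of pick-n-swaps. Cycle following a non-trivial cycle of $\pi$ (cell $i$ points to cell $\pi_i$) from cell $i$: pick up the item at $i$, repeatedly carry the held item to its goal and swap, and finally place the last held item into $i$. SweepCyclesLTR: cycle-follow the non-trivial cycles $c_1,\dots,c_k$ one at a time in order, then return to $p_0$. SwitchCyclesLTR: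 also cycle-follows all cycles, but may interrupt a cycle $c_1$ between consecutive items $a_1,b_1$ to travel from $a_1$ to an item $a_2$ of another cycle $c_2$, complete $c_2$ (and possibly further cycles), then go to $b_1$ to finish $c_1$; the switching schedule is chosen via a directed minimum spanning tree on the graph whose vertices are the cycles and the rest position, with directed edge weights given by the switching distances. *)

theory Defs
  imports Complex_Main "HOL-Combinatorics.Permutations"
begin

text \<open>Cell with label l (1 <= l <= m1*m2) lies in row r = (l-1) mod m1 + 1 and column
  c = (l-1) div m1 + 1, i.e. l = (c-1) m1 + r; its position is (r,c) in R^2.\<close>
definition loc :: "nat \<Rightarrow> nat \<Rightarrow> real \<times> real" where
  "loc m1 l = (real ((l - 1) mod m1 + 1), real ((l - 1) div m1 + 1))"

definition l2dist :: "real \<times> real \<Rightarrow> real \<times> real \<Rightarrow> real" where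
  "l2dist x y = sqrt ((fst x - fst y)^2 + (snd x - snd y)^2)"

text \<open>A plan is the list [p_1,...,p_N] of cells at which pick-n-swaps are performed;
  p_0 = p_{N+1} = cell 1 (top-left). A state is (arrangement, held item).
  Pick-n-swap at p: the held item (if any) goes into p, the former content of p
  (if any) becomes the held item. This covers pick, swap and put.\<close>
definition pns :: "(nat \<Rightarrow> nat option) \<times> nat option \<Rightarrow> nat \<Rightarrow> (nat \<Rightarrow> nat option) \<times> nat option" where
  "pns st p = ((fst st)(p := snd st), fst st p)"

definition run :: "(nat \<Rightarrow> nat option) \<times> nat option \<Rightarrow> nat list \<Rightarrow> (nat \<Rightarrow> nat option) \<times> nat option" where
  "run st P = foldl pns st P"

definition init_arr :: "nat \<Rightarrow> (nat \<Rightarrow> nat) \<Rightarrow> nat \<Rightarrow> nat option" where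
  "init_arr n \<pi> = (\<lambda>i. if i \<in> {1..n} then Some (\<pi> i) else None)"

definition goal_arr :: "nat \<Rightarrow> nat \<Rightarrow> nat option" where
  "goal_arr n = (\<lambda>i. if i \<in> {1..n} then Some i else None)"

definition valid_plan :: "nat \<Rightarrow> (nat \<Rightarrow> nat) \<Rightarrow> nat list \<Rightarrow> bool" where
  "valid_plan n \<pi> P \<longleftrightarrow> set P \<subseteq> {1..n} \<and> run (init_arr n \<pi>, None) P = (goal_arr n, None)"

definition JT :: "real \<Rightarrow> real \<Rightarrow> nat \<Rightarrow> nat list \<Rightarrow> real" where
  "JT cp ct m1 P =
     (let path = 1 # P @ [1] in
      real (length P) * cp
      + (\<Sum>i<length P + 1. l2dist (loc m1 (path ! i)) (loc m1 (path ! Suc i)) * ct))"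

definition Jopt :: "real \<Rightarrow> real \<Rightarrow> nat \<Rightarrow> nat \<Rightarrow> (nat \<Rightarrow> nat) \<Rightarrow> real" where
  "Jopt cp ct m1 m2 \<pi> = Inf (JT cp ct m1 ` {P. valid_plan (m1 * m2) \<pi> P})"

definition orb :: "(nat \<Rightarrow> nat) \<Rightarrow> nat \<Rightarrow> nat set" where
  "orb \<pi> s = {(\<pi> ^^ k) s | k. True}"

definition cyc_len :: "(nat \<Rightarrow> nat) \<Rightarrow> nat \<Rightarrow> nat" where
  "cyc_len \<pi> s = (LEAST k. 0 < k \<and> (\<pi> ^^ k) s = s)"

text \<open>Cycle following from cell s: pick at s, carry each held item to its goal and swap,
  finally place the last item into s. Visited cells: s, pi s, ..., pi^(L-1) s, s.\<close>
definition cyc_follow :: "(nat \<Rightarrow> nat) \<Rightarrow> nat \<Rightarrow> nat list" where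
  "cyc_follow \<pi> s = s # map (\<lambda>k. (\<pi> ^^ Suc k) s) [0..<cyc_len \<pi> s]"

definition nontriv :: "nat \<Rightarrow> (nat \<Rightarrow> nat) \<Rightarrow> nat set" where
  "nontriv n \<pi> = {x \<in> {1..n}. \<pi> x \<noteq> x}"

text \<open>SweepCyclesLTR: cycle-follow the non-trivial cycles one at a time, in any order and
  from any starting cell of each cycle (one start per non-trivial cycle).\<close>
definition sweep_plans :: "nat \<Rightarrow> (nat \<Rightarrow> nat) \<Rightarrow> nat list set" where
  "sweep_plans n \<pi> =
     {concat (map (cyc_follow \<pi>) starts) | starts.
        (\<forall>s \<in> set starts. \<pi> s \<noteq> s) \<and>
        distinct (map (orb \<pi>) starts) \<and>
        set (map (orb \<pi>) starts) = orb \<pi> ` nontriv n \<pi>}"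

text \<open>SwitchCyclesLTR: cycle following with switches. swc pi S xs: xs follows the cycle
  of some start s, and right after handling the item at a (i.e. between consecutive items
  a and pi a of the cycle) it may switch to a sequence ins a of further (recursively
  switched) cycles before going on to pi a; S is the set of cells of all cycles involved.
  swseq pi S xs: xs is a concatenation of such groups, performed one after the other from
  the rest position. Any switching schedule (in particular the one selected by the directed
  minimum spanning tree) is of this form.\<close>
inductive swc :: "(nat \<Rightarrow> nat) \<Rightarrow> nat set \<Rightarrow> nat list \<Rightarrow> bool"
  and swseq :: "(nat \<Rightarrow> nat) \<Rightarrow> nat set \<Rightarrow> nat list \<Rightarrow> bool"
  for \<pi> :: "nat \<Rightarrow> nat" where
  swseq_nil: "swseq \<pi> {} []"
| swseq_snoc: "swseq \<pi> S1 xs \<Longrightarrow> swc \<pi> S2 ys \<Longrightarrow> S1 \<inter> S2 = {} \<Longrightarrow> swseq \<pi> (S1 \<union> S2) (xs @ ys)"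
| swc_cycle: "\<pi> s \<noteq> s \<Longrightarrow>
    (\<forall>a \<in> orb \<pi> s. swseq \<pi> (T a) (ins a)) \<Longrightarrow>
    (\<forall>a \<in> orb \<pi> s. T a \<inter> orb \<pi> s = {}) \<Longrightarrow>
    (\<forall>a \<in> orb \<pi> s. \<forall>b \<in> orb \<pi> s. a \<noteq> b \<longrightarrow> T a \<inter> T b = {}) \<Longrightarrow>
    swc \<pi> (orb \<pi> s \<union> (\<Union>a \<in> orb \<pi> s. T a))
      (s # concat (map (\<lambda>k. ins ((\<pi> ^^ k) s) @ [(\<pi> ^^ Suc k) s]) [0..<cyc_len \<pi> s]))"

definition switch_plans :: "nat \<Rightarrow> (nat \<Rightarrow> nat) \<Rightarrow> nat list set" where
  "switch_plans n \<pi> = {xs. swseq \<pi> (nontriv n \<pi>) xs}"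

definition E_perm :: "nat \<Rightarrow> ((nat \<Rightarrow> nat) \<Rightarrow> real) \<Rightarrow> real" where
  "E_perm n f = (\<Sum>\<pi> \<in> {\<pi>. \<pi> permutes {1..n}}. f \<pi>) / real (card {\<pi>. \<pi> permutes {1..n}})"

definition tends_to_one :: "(nat \<Rightarrow> nat \<Rightarrow> real) \<Rightarrow> bool" where
  "tends_to_one f \<longleftrightarrow> (\<forall>\<epsilon>>0. \<exists>M. \<forall>m1 m2. M \<le> m1 * m2 \<longrightarrow> \<bar>f m1 m2 - 1\<bar> < \<epsilon>)"

end

theory Submission
  imports Defs "HOL-Combinatorics.Orbits"
begin
abbreviation dd :: "nat \<Rightarrow> nat \<Rightarrow> nat \<Rightarrow> real" where
  "dd m1 i j \<equiv> l2dist (loc m1 i) (loc m1 j)"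

lemma l2dist_nonneg: "0 \<le> l2dist x y"
  by (simp add: l2dist_def)

lemma l2dist_self[simp]: "l2dist x x = 0"
  by (simp add: l2dist_def)

lemma l2dist_sym: "l2dist x y = l2dist y x"
  by (simp add: l2dist_def power2_commute)

lemma l2dist_triangle: "l2dist x z \<le> l2dist x y + l2dist y z"
proof -
  have "l2dist x z = sqrt (((fst x - fst y) + (fst y - fst z))\<^sup>2 + ((snd x - snd y) + (snd y - snd z))\<^sup>2)"
    by (simp add: l2dist_def)
  also have "\<dots> \<le> l2dist x y + l2dist y z"
    unfolding l2dist_def by (rule real_sqrt_sum_squares_triangle_ineq)
  finally show ?thesis .
qed

lemma l2dist_ge_fst: "\<bar>fst x - fst y\<bar> \<le> l2dist x y"
  unfolding l2dist_def by (metis abs_le_square_iff real_sqrt_abs real_sqrt_sum_squares_ge1 abs_ge_zero order_trans real_sqrt_le_iff le_add_same_cancel1 zero_le_power2)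

lemma l2dist_ge_snd: "\<bar>snd x - snd y\<bar> \<le> l2dist x y"
  unfolding l2dist_def by (metis abs_le_square_iff real_sqrt_abs real_sqrt_sum_squares_ge2 abs_ge_zero order_trans real_sqrt_le_iff le_add_same_cancel2 zero_le_power2)

lemma dd_le:
  assumes "i \<in> {1..m1*m2}" "j \<in> {1..m1*m2}"
  shows "dd m1 i j \<le> real (m1 + m2)"
proof -
  have m1: "m1 > 0" using assms by (cases "m1 = 0") auto
  have "i - 1 < m2 * m1" "j - 1 < m2 * m1" using assms by (auto simp: mult.commute)
  then have ci: "(i - 1) div m1 < m2" and cj: "(j - 1) div m1 < m2"
    by (auto intro: less_mult_imp_div_less)
  have ri: "(i - 1) mod m1 < m1" using m1 by simp
  have rj: "(j - 1) mod m1 < m1" using m1 by simp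
  have "dd m1 i j \<le> \<bar>fst (loc m1 i) - fst (loc m1 j)\<bar> + \<bar>snd (loc m1 i) - snd (loc m1 j)\<bar>"
    unfolding l2dist_def by (rule sqrt_sum_squares_le_sum_abs)
  also have "\<dots> \<le> real m1 + real m2"
  proof -
    have "\<bar>real ((i - 1) mod m1 + 1) - real ((j - 1) mod m1 + 1)\<bar> \<le> real m1"
      using ri rj by (simp only: abs_le_iff of_nat_add of_nat_1; linarith)
    moreover have "\<bar>real ((i - 1) div m1 + 1) - real ((j - 1) div m1 + 1)\<bar> \<le> real m2"
      using ci cj by (simp only: abs_le_iff of_nat_add of_nat_1; linarith)
    ultimately show ?thesis by (simp add: loc_def)
  qed
  finally show ?thesis by simp
qed

fun pl :: "nat \<Rightarrow> nat \<Rightarrow> nat list \<Rightarrow> real" where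
  "pl m1 q [] = 0"
| "pl m1 q (p # ps) = dd m1 q p + pl m1 p ps"

lemma pl_append: "pl m1 q (xs @ ys) = pl m1 q xs + pl m1 (last (q # xs)) ys"
  by (induction xs arbitrary: q) auto

lemma pl_nonneg: "0 \<le> pl m1 q xs"
  by (induction xs arbitrary: q) (auto simp: l2dist_nonneg add_nonneg_nonneg)

lemma path_sum:
  "(\<Sum>i<length P + 1. dd m1 ((q # P @ [r]) ! i) ((q # P @ [r]) ! Suc i))
     = pl m1 q P + dd m1 (last (q # P)) r"
proof (induction P arbitrary: q)
  case Nil
  then show ?case by simp
next
  case (Cons p P)
  have "(\<Sum>i<length (p # P) + 1. dd m1 ((q # (p # P) @ [r]) ! i) ((q # (p # P) @ [r]) ! Suc i))
     = (\<Sum>i<Suc (length P + 1). dd m1 ((q # (p # P) @ [r]) ! i) ((q # (p # P) @ [r]) ! Suc i))"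
    by simp
  also have "\<dots> = dd m1 q p + (\<Sum>i<length P + 1. dd m1 ((p # P @ [r]) ! i) ((p # P @ [r]) ! Suc i))"
    by (subst sum.lessThan_Suc_shift) simp
  also have "\<dots> = pl m1 q (p # P) + dd m1 (last (q # p # P)) r"
    using Cons by simp
  finally show ?case .
qed

lemma JT_eq: "JT cp ct m1 P = real (length P) * cp + ct * (pl m1 1 P + dd m1 (last (1 # P)) 1)"
  unfolding JT_def Let_def sum_distrib_right[symmetric] path_sum by (simp add: mult.commute)

lemma perm_of_permutes: "(\<pi>::nat\<Rightarrow>nat) permutes {1..n} \<Longrightarrow> permutation \<pi>"
  unfolding permutation_permutes by (intro exI[of _ "{1..n}"]) auto

lemma orb_eq_orbit: "permutation \<pi> \<Longrightarrow> orb \<pi> x = orbit \<pi> x"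
  unfolding orb_def by (simp add: orbit_altdef_permutation)

lemma orb_self: "x \<in> orb \<pi> x"
  unfolding orb_def by (auto intro: exI[where x=0])

lemma orb_funpow: "(\<pi> ^^ k) x \<in> orb \<pi> x"
  unfolding orb_def by auto

lemma orb_step: "y \<in> orb \<pi> x \<Longrightarrow> \<pi> y \<in> orb \<pi> x"
proof -
  assume "y \<in> orb \<pi> x"
  then obtain k where "y = (\<pi> ^^ k) x" unfolding orb_def by blast
  then have "\<pi> y = (\<pi> ^^ Suc k) x" by simp
  then show ?thesis by (metis orb_funpow)
qed

lemma orb_closed:
  assumes "x \<in> A" "\<And>y. y \<in> A \<Longrightarrow> \<pi> y \<in> A"
  shows "orb \<pi> x \<subseteq> A"
proof
  fix z assume "z \<in> orb \<pi> x"
  then obtain k where "z = (\<pi> ^^ k) x" unfolding orb_def by auto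
  moreover have "(\<pi> ^^ k) x \<in> A" for k
    by (induction k) (use assms in auto)
  ultimately show "z \<in> A" by simp
qed

lemma orb_permutes_subset: "\<pi> permutes S \<Longrightarrow> x \<in> S \<Longrightarrow> orb \<pi> x \<subseteq> S"
  by (rule orb_closed) (auto simp: permutes_in_image)

lemma orb_fixed: "\<pi> x = x \<Longrightarrow> orb \<pi> x = {x}"
  using orb_self orb_closed[of x "{x}" \<pi>] by auto

lemma orb_same:
  assumes "permutation \<pi>" "y \<in> orb \<pi> x"
  shows "orb \<pi> y = orb \<pi> x"
proof -
  have sx: "x \<in> orbit \<pi> x" using assms(1) by (rule permutation_self_in_orbit)
  have yx: "y \<in> orbit \<pi> x" using assms orb_eq_orbit by auto
  have "orbit \<pi> y \<subseteq> orbit \<pi> x"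
  proof
    fix z assume "z \<in> orbit \<pi> y" then show "z \<in> orbit \<pi> x" by (rule orbit_trans[OF _ yx])
  qed
  moreover have xy: "x \<in> orbit \<pi> y" using orbit_swap[OF sx yx] .
  have "orbit \<pi> x \<subseteq> orbit \<pi> y"
  proof
    fix z assume "z \<in> orbit \<pi> x" then show "z \<in> orbit \<pi> y" by (rule orbit_trans[OF _ xy])
  qed
  ultimately show ?thesis using assms(1) orb_eq_orbit by auto
qed

lemma orb_disj:
  assumes "permutation \<pi>" "orb \<pi> x \<noteq> orb \<pi> y"
  shows "orb \<pi> x \<inter> orb \<pi> y = {}"
proof (rule ccontr)
  assume "orb \<pi> x \<inter> orb \<pi> y \<noteq> {}"
  then obtain z where z: "z \<in> orb \<pi> x" "z \<in> orb \<pi> y" by blast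
  have "orb \<pi> z = orb \<pi> x" using orb_same[OF assms(1) z(1)] .
  moreover have "orb \<pi> z = orb \<pi> y" using orb_same[OF assms(1) z(2)] .
  ultimately show False using assms(2) by simp
qed

lemma finite_orb: "permutation \<pi> \<Longrightarrow> finite (orb \<pi> x)"
  using orb_eq_orbit finite_orbit permutation_self_in_orbit by metis

lemma cyc_len_eq:
  assumes "permutation \<pi>"
  shows "cyc_len \<pi> s = funpow_dist1 \<pi> s s"
proof -
  have sx: "s \<in> orbit \<pi> s" using assms by (rule permutation_self_in_orbit)
  have p: "(\<pi> ^^ funpow_dist1 \<pi> s s) s = s" using funpow_dist1_prop[OF sx] .
  show ?thesis unfolding cyc_len_def
  proof (rule Least_equality)
    show "0 < funpow_dist1 \<pi> s s \<and> (\<pi> ^^ funpow_dist1 \<pi> s s) s = s" using p by simp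
    fix y assume "0 < y \<and> (\<pi> ^^ y) s = s"
    then show "funpow_dist1 \<pi> s s \<le> y" using funpow_dist1_le_self[OF _ _ sx, of y] by blast
  qed
qed

locale cyc =
  fixes \<pi> :: "nat \<Rightarrow> nat" and s :: nat
  assumes perm: "permutation \<pi>"
begin

abbreviation "L \<equiv> cyc_len \<pi> s"

lemma sx: "s \<in> orbit \<pi> s" using perm by (rule permutation_self_in_orbit)

lemma L_pos: "0 < L" using cyc_len_eq[OF perm] by simp

lemma L_ret: "(\<pi> ^^ L) s = s"
  using cyc_len_eq[OF perm] funpow_dist1_prop[OF sx] by simp

lemma L_inj: "inj_on (\<lambda>k. (\<pi> ^^ k) s) {0..<L}"
  using cyc_len_eq[OF perm] inj_on_funpow_dist1[OF sx] by simp

lemma L_img: "(\<lambda>k. (\<pi> ^^ k) s) ` {0..<L} = orb \<pi> s"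
  using cyc_len_eq[OF perm] orbit_conv_funpow_dist1[OF sx] orb_eq_orbit[OF perm] by simp

lemma L_card: "card (orb \<pi> s) = L"
  using card_image[OF L_inj] L_img by simp

lemma L_ge2: "\<pi> s \<noteq> s \<Longrightarrow> 2 \<le> L"
proof (rule ccontr)
  assume "\<pi> s \<noteq> s" "\<not> 2 \<le> L"
  then have "L = 1" using L_pos by simp
  then show False using L_ret \<open>\<pi> s \<noteq> s\<close> by simp
qed

lemma sum_reindex: "(\<Sum>k<L. g ((\<pi> ^^ k) s)) = (\<Sum>a\<in>orb \<pi> s. g a)"
proof -
  have "(\<Sum>a\<in>orb \<pi> s. g a) = (\<Sum>k\<in>{0..<L}. g ((\<pi> ^^ k) s))"
    using sum.reindex[OF L_inj, of g] L_img by (simp add: comp_def)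
  then show ?thesis by (simp add: atLeast0LessThan)
qed

lemma funpow_neq: "0 < k \<Longrightarrow> k < L \<Longrightarrow> (\<pi> ^^ k) s \<noteq> s"
  using inj_on_contraD[OF L_inj, of k 0] L_pos by simp

end

lemma nontriv_closed:
  assumes "\<pi> permutes {1..n}" "x \<in> nontriv n \<pi>" "y \<in> orb \<pi> x"
  shows "y \<in> nontriv n \<pi>"
proof -
  have pm: "permutation \<pi>" using assms(1) by (rule perm_of_permutes)
  have "x \<in> {1..n}" using assms(2) unfolding nontriv_def by blast
  then have "y \<in> {1..n}" using orb_permutes_subset[OF assms(1), of x] assms(3) by blast
  moreover have "\<pi> y \<noteq> y"
  proof
    assume "\<pi> y = y"
    then have "orb \<pi> y = {y}" by (rule orb_fixed)
    moreover have "orb \<pi> y = orb \<pi> x" using orb_same[OF pm assms(3)] .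
    ultimately have "x = y" using orb_self[of x \<pi>] by auto
    then show False using \<open>\<pi> y = y\<close> assms(2) unfolding nontriv_def by auto
  qed
  ultimately show ?thesis unfolding nontriv_def by auto
qed

definition sw_inv :: "(nat \<Rightarrow> nat) \<Rightarrow> nat \<Rightarrow> nat \<Rightarrow> real \<Rightarrow> nat set \<Rightarrow> nat list \<Rightarrow> bool" where
  "sw_inv \<pi> n m1 B S xs \<longleftrightarrow> finite S \<and> S \<subseteq> {1..n} \<and> (\<forall>x\<in>S. orb \<pi> x \<subseteq> S) \<and> set xs \<subseteq> S
     \<and> length xs = card S + card (orb \<pi> ` S)
     \<and> (\<forall>q. (\<Sum>c\<in>S. dd m1 c (\<pi> c)) + dd m1 q (last (q # xs)) \<le> pl m1 q xs)
     \<and> (\<forall>q\<in>{1..n}. pl m1 q xs + (if xs = [] then 0 else B)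
            \<le> (\<Sum>c\<in>S. dd m1 c (\<pi> c)) + 2 * B * real (card (orb \<pi> ` S)))"

lemma orb_img_disj:
  assumes "\<forall>x\<in>S1. orb \<pi> x \<subseteq> S1" "\<forall>x\<in>S2. orb \<pi> x \<subseteq> S2" "S1 \<inter> S2 = {}"
  shows "orb \<pi> ` S1 \<inter> orb \<pi> ` S2 = {}"
proof (rule ccontr)
  assume "orb \<pi> ` S1 \<inter> orb \<pi> ` S2 \<noteq> {}"
  then obtain x y where xy: "x \<in> S1" "y \<in> S2" "orb \<pi> x = orb \<pi> y" by blast
  have "y \<in> orb \<pi> x" using xy(3) orb_self[of y \<pi>] by simp
  then have "y \<in> S1" using assms(1) xy(1) by blast
  then show False using xy(2) assms(3) by blast
qed

lemma pl_blocks: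
  assumes "\<forall>k<N. f k \<noteq> [] \<and> last (f k) = y (Suc k)"
  shows "pl m1 (y 0) (concat (map f [0..<N])) = (\<Sum>k<N. pl m1 (y k) (f k))
         \<and> last (y 0 # concat (map f [0..<N])) = y N"
  using assms
proof (induction N)
  case 0
  then show ?case by simp
next
  case (Suc N)
  then have IH: "pl m1 (y 0) (concat (map f [0..<N])) = (\<Sum>k<N. pl m1 (y k) (f k))"
     "last (y 0 # concat (map f [0..<N])) = y N" by auto
  have fN: "f N \<noteq> []" "last (f N) = y (Suc N)" using Suc.prems by auto
  show ?case using IH fN by (simp add: pl_append)
qed

lemma swc_nonempty: "swc \<pi> S xs \<Longrightarrow> xs \<noteq> []"
  by (induction rule: swc.cases) auto

lemma sw_main:
  fixes \<pi> :: "nat \<Rightarrow> nat"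
  assumes perm: "\<pi> permutes {1..n}" and B: "0 \<le> B"
    and Bd: "\<And>i j. i \<in> {1..n} \<Longrightarrow> j \<in> {1..n} \<Longrightarrow> dd m1 i j \<le> B"
  shows "swc \<pi> S xs \<Longrightarrow> sw_inv \<pi> n m1 B S xs"
    and "swseq \<pi> S xs \<Longrightarrow> sw_inv \<pi> n m1 B S xs"
proof (induction rule: swc_swseq.inducts)
  case swseq_nil
  then show ?case unfolding sw_inv_def by simp
next
  case (swseq_snoc S1 xs S2 ys)
  have i1: "sw_inv \<pi> n m1 B S1 xs" and i2: "sw_inv \<pi> n m1 B S2 ys" and d: "S1 \<inter> S2 = {}"
    using swseq_snoc by auto
  have ysne: "ys \<noteq> []" using swseq_snoc swc_nonempty by blast
  define Sg where "Sg = (\<lambda>S. \<Sum>c\<in>S. dd m1 c (\<pi> c))"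
  have f1: "finite S1" and s1: "S1 \<subseteq> {1..n}" and c1: "\<forall>x\<in>S1. orb \<pi> x \<subseteq> S1"
    and set1: "set xs \<subseteq> S1" and len1: "length xs = card S1 + card (orb \<pi> ` S1)"
    and lo1: "\<And>q. Sg S1 + dd m1 q (last (q # xs)) \<le> pl m1 q xs"
    and up1: "\<And>q. q \<in> {1..n} \<Longrightarrow> pl m1 q xs + (if xs = [] then 0 else B) \<le> Sg S1 + 2 * B * real (card (orb \<pi> ` S1))"
    using i1 unfolding sw_inv_def Sg_def by auto
  have f2: "finite S2" and s2: "S2 \<subseteq> {1..n}" and c2: "\<forall>x\<in>S2. orb \<pi> x \<subseteq> S2"
    and set2: "set ys \<subseteq> S2" and len2: "length ys = card S2 + card (orb \<pi> ` S2)"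
    and lo2: "\<And>q. Sg S2 + dd m1 q (last (q # ys)) \<le> pl m1 q ys"
    and up2: "\<And>q. q \<in> {1..n} \<Longrightarrow> pl m1 q ys + B \<le> Sg S2 + 2 * B * real (card (orb \<pi> ` S2))"
    using i2 ysne unfolding sw_inv_def Sg_def by auto
  have SgU: "Sg (S1 \<union> S2) = Sg S1 + Sg S2" unfolding Sg_def using f1 f2 d by (rule sum.union_disjoint)
  have cardU: "card (S1 \<union> S2) = card S1 + card S2" using f1 f2 d by (rule card_Un_disjoint)
  have od: "orb \<pi> ` S1 \<inter> orb \<pi> ` S2 = {}" using c1 c2 d by (rule orb_img_disj)
  have cardO: "card (orb \<pi> ` (S1 \<union> S2)) = card (orb \<pi> ` S1) + card (orb \<pi> ` S2)"
    unfolding image_Un using f1 f2 od by (simp add: card_Un_disjoint)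
  have lastq: "last (q # xs @ ys) = last (last (q # xs) # ys)" for q using ysne by simp
  have lo: "Sg (S1 \<union> S2) + dd m1 q (last (q # xs @ ys)) \<le> pl m1 q (xs @ ys)" for q
  proof -
    have "dd m1 q (last (q # xs @ ys)) \<le> dd m1 q (last (q # xs)) + dd m1 (last (q # xs)) (last (last (q # xs) # ys))"
      unfolding lastq by (rule l2dist_triangle)
    then show ?thesis using lo1[of q] lo2[of "last (q # xs)"] SgU by (simp add: pl_append)
  qed
  have up: "pl m1 q (xs @ ys) + B \<le> Sg (S1 \<union> S2) + 2 * B * real (card (orb \<pi> ` (S1 \<union> S2)))"
    if q: "q \<in> {1..n}" for q
  proof -
    have l: "last (q # xs) \<in> {1..n}"
    proof (cases "xs = []")
      case True then show ?thesis using q by simp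
    next
      case False then have "last xs \<in> set xs" by simp
      then have "last xs \<in> {1..n}" using set1 s1 by blast
      then show ?thesis using False by simp
    qed
    have "pl m1 q xs \<le> Sg S1 + 2 * B * real (card (orb \<pi> ` S1))" using up1[OF q] B by (simp split: if_splits)
    then show ?thesis using up2[OF l] SgU cardO by (simp add: pl_append algebra_simps)
  qed
  show ?case unfolding sw_inv_def Sg_def[symmetric]
    using f1 f2 s1 s2 c1 c2 set1 set2 len1 len2 cardU cardO lo up ysne by auto
next
  case (swc_cycle s T ins)
  define Ob where "Ob = orb \<pi> s"
  define xs where "xs = s # concat (map (\<lambda>k. ins ((\<pi> ^^ k) s) @ [(\<pi> ^^ Suc k) s]) [0..<cyc_len \<pi> s])"
  define S where "S = Ob \<union> (\<Union>a\<in>Ob. T a)"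
  define Sg where "Sg = (\<lambda>S. \<Sum>c\<in>S. dd m1 c (\<pi> c))"
  have pm: "permutation \<pi>" using perm by (rule perm_of_permutes)
  interpret C: cyc \<pi> s using pm by unfold_locales
  have ns: "\<pi> s \<noteq> s" using swc_cycle by blast
  have IHa: "sw_inv \<pi> n m1 B (T a) (ins a)" if "a \<in> Ob" for a using swc_cycle that unfolding Ob_def by blast
  have dO: "T a \<inter> Ob = {}" if "a \<in> Ob" for a using swc_cycle that unfolding Ob_def by blast
  have dT: "T a \<inter> T b = {}" if "a \<in> Ob" "b \<in> Ob" "a \<noteq> b" for a b using swc_cycle that unfolding Ob_def by blast
  have sn: "s \<in> {1..n}" using ns permutes_not_in[OF perm] by blast
  have Osub: "Ob \<subseteq> {1..n}" using orb_permutes_subset[OF perm sn] unfolding Ob_def .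
  have finO: "finite Ob" unfolding Ob_def using pm by (rule finite_orb)
  have Oorb: "orb \<pi> x = Ob" if "x \<in> Ob" for x using orb_same[OF pm] that unfolding Ob_def by blast
  have ak: "(\<pi> ^^ k) s \<in> Ob" for k unfolding Ob_def by (rule orb_funpow)
  have sO: "s \<in> Ob" unfolding Ob_def by (rule orb_self)
  have piO: "\<pi> a \<in> Ob" if "a \<in> Ob" for a using that unfolding Ob_def by (rule orb_step)
  have fT: "finite (T a)" and sT: "T a \<subseteq> {1..n}" and cT: "\<forall>x\<in>T a. orb \<pi> x \<subseteq> T a"
    and setT: "set (ins a) \<subseteq> T a" and lenT: "length (ins a) = card (T a) + card (orb \<pi> ` T a)"
    and loT: "\<And>q. Sg (T a) + dd m1 q (last (q # ins a)) \<le> pl m1 q (ins a)"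
    and upT: "\<And>q. q \<in> {1..n} \<Longrightarrow> pl m1 q (ins a) + (if ins a = [] then 0 else B)
                 \<le> Sg (T a) + 2 * B * real (card (orb \<pi> ` T a))"
    if "a \<in> Ob" for a using IHa[OF that] unfolding sw_inv_def Sg_def by auto
  define g where "g = (\<lambda>a. pl m1 a (ins a) + dd m1 (last (a # ins a)) (\<pi> a))"
  have blocks: "pl m1 s (concat (map (\<lambda>k. ins ((\<pi> ^^ k) s) @ [(\<pi> ^^ Suc k) s]) [0..<C.L]))
      = (\<Sum>k<C.L. pl m1 ((\<pi> ^^ k) s) (ins ((\<pi> ^^ k) s) @ [(\<pi> ^^ Suc k) s]))
     \<and> last (s # concat (map (\<lambda>k. ins ((\<pi> ^^ k) s) @ [(\<pi> ^^ Suc k) s]) [0..<C.L])) = (\<pi> ^^ C.L) s"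
    using pl_blocks[of C.L "\<lambda>k. ins ((\<pi> ^^ k) s) @ [(\<pi> ^^ Suc k) s]" "\<lambda>k. (\<pi> ^^ k) s" m1] by simp
  have gk: "pl m1 ((\<pi> ^^ k) s) (ins ((\<pi> ^^ k) s) @ [(\<pi> ^^ Suc k) s]) = g ((\<pi> ^^ k) s)" for k
    by (simp add: g_def pl_append)
  have plxs: "pl m1 q xs = dd m1 q s + (\<Sum>a\<in>Ob. g a)" for q
    using blocks gk C.sum_reindex[of g] unfolding xs_def Ob_def by simp
  have lastxs: "last (q # xs) = s" for q
    using blocks C.L_ret unfolding xs_def by simp
  have glo: "Sg (T a) + dd m1 a (\<pi> a) \<le> g a" if a: "a \<in> Ob" for a
  proof -
    have "dd m1 a (\<pi> a) \<le> dd m1 a (last (a # ins a)) + dd m1 (last (a # ins a)) (\<pi> a)"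
      by (rule l2dist_triangle)
    then show ?thesis using loT[OF a, of a] unfolding g_def by simp
  qed
  have gup: "g a \<le> Sg (T a) + dd m1 a (\<pi> a) + 2 * B * real (card (orb \<pi> ` T a))" if a: "a \<in> Ob" for a
  proof (cases "ins a = []")
    case True
    have "0 \<le> Sg (T a)" unfolding Sg_def by (rule sum_nonneg) (simp add: l2dist_nonneg)
    then show ?thesis using True B unfolding g_def by simp
  next
    case False
    have an: "a \<in> {1..n}" using a Osub by blast
    have "last (ins a) \<in> set (ins a)" using False by simp
    then have "last (ins a) \<in> {1..n}" using setT[OF a] sT[OF a] by blast
    then have ln: "last (a # ins a) \<in> {1..n}" using False by simp
    have pn: "\<pi> a \<in> {1..n}" using piO[OF a] Osub by blast
    have "dd m1 (last (a # ins a)) (\<pi> a) \<le> B" using Bd[OF ln pn] .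
    moreover have "pl m1 a (ins a) + B \<le> Sg (T a) + 2 * B * real (card (orb \<pi> ` T a))"
      using upT[OF a an] False by simp
    moreover have "0 \<le> dd m1 a (\<pi> a)" by (rule l2dist_nonneg)
    ultimately show ?thesis unfolding g_def by simp
  qed
  have finU: "finite (\<Union>a\<in>Ob. T a)" using finO fT by blast
  have dOU: "Ob \<inter> (\<Union>a\<in>Ob. T a) = {}" using dO by blast
  have SgS: "Sg S = Sg Ob + (\<Sum>a\<in>Ob. Sg (T a))"
  proof -
    have "Sg S = Sg Ob + Sg (\<Union>a\<in>Ob. T a)" unfolding S_def Sg_def
      using finO finU dOU by (rule sum.union_disjoint)
    also have "Sg (\<Union>a\<in>Ob. T a) = (\<Sum>a\<in>Ob. Sg (T a))" unfolding Sg_def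
      using finO fT dT by (intro sum.UNION_disjoint) auto
    finally show ?thesis .
  qed
  have SgO: "Sg Ob = (\<Sum>a\<in>Ob. dd m1 a (\<pi> a))" unfolding Sg_def ..
  have cardS: "card S = C.L + (\<Sum>a\<in>Ob. card (T a))"
  proof -
    have "card S = card Ob + card (\<Union>a\<in>Ob. T a)" unfolding S_def
      using finO finU dOU by (rule card_Un_disjoint)
    also have "card (\<Union>a\<in>Ob. T a) = (\<Sum>a\<in>Ob. card (T a))"
      using finO fT dT by (intro card_UN_disjoint) auto
    finally show ?thesis using C.L_card unfolding Ob_def by simp
  qed
  have orbO: "orb \<pi> ` Ob = {Ob}" using Oorb sO by blast
  have orbS: "orb \<pi> ` S = insert Ob (\<Union>a\<in>Ob. orb \<pi> ` T a)"
    unfolding S_def image_Un image_UN orbO by simp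
  have Onot: "Ob \<notin> (\<Union>a\<in>Ob. orb \<pi> ` T a)"
  proof
    assume "Ob \<in> (\<Union>a\<in>Ob. orb \<pi> ` T a)"
    then obtain a x where a: "a \<in> Ob" and x: "x \<in> T a" and e: "Ob = orb \<pi> x" by blast
    have "x \<in> Ob" using e orb_self[of x \<pi>] by simp
    then show False using dO[OF a] x by blast
  qed
  have cardOS: "card (orb \<pi> ` S) = 1 + (\<Sum>a\<in>Ob. card (orb \<pi> ` T a))"
  proof -
    have fin2: "finite (\<Union>a\<in>Ob. orb \<pi> ` T a)" using finO fT by blast
    have "card (orb \<pi> ` S) = 1 + card (\<Union>a\<in>Ob. orb \<pi> ` T a)"
      unfolding orbS using fin2 Onot by simp
    also have "card (\<Union>a\<in>Ob. orb \<pi> ` T a) = (\<Sum>a\<in>Ob. card (orb \<pi> ` T a))"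
    proof (rule card_UN_disjoint)
      show "finite Ob" by (rule finO)
      show "\<forall>a\<in>Ob. finite (orb \<pi> ` T a)" using fT by blast
      show "\<forall>a\<in>Ob. \<forall>b\<in>Ob. a \<noteq> b \<longrightarrow> orb \<pi> ` T a \<inter> orb \<pi> ` T b = {}"
      proof (intro ballI impI)
        fix a b assume ab: "a \<in> Ob" "b \<in> Ob" "a \<noteq> b"
        show "orb \<pi> ` T a \<inter> orb \<pi> ` T b = {}"
          by (rule orb_img_disj[OF cT[OF ab(1)] cT[OF ab(2)] dT[OF ab]])
      qed
    qed
    finally show ?thesis .
  qed
  have lenxs: "length xs = 1 + C.L + (\<Sum>a\<in>Ob. length (ins a))"
  proof -
    have "length (concat (map (\<lambda>k. ins ((\<pi> ^^ k) s) @ [(\<pi> ^^ Suc k) s]) [0..<C.L]))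
        = (\<Sum>k\<in>{0..<C.L}. length (ins ((\<pi> ^^ k) s)) + 1)"
      by (simp add: length_concat interv_sum_list_conv_sum_set_nat comp_def)
    also have "\<dots> = (\<Sum>k<C.L. length (ins ((\<pi> ^^ k) s))) + C.L"
      by (simp only: sum.distrib atLeast0LessThan) simp
    also have "(\<Sum>k<C.L. length (ins ((\<pi> ^^ k) s))) = (\<Sum>a\<in>Ob. length (ins a))"
      using C.sum_reindex unfolding Ob_def .
    finally show ?thesis unfolding xs_def by simp
  qed
  have len: "length xs = card S + card (orb \<pi> ` S)"
  proof -
    have "(\<Sum>a\<in>Ob. length (ins a)) = (\<Sum>a\<in>Ob. card (T a)) + (\<Sum>a\<in>Ob. card (orb \<pi> ` T a))"
      using lenT by (simp add: sum.distrib[symmetric])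
    then show ?thesis using lenxs cardS cardOS by simp
  qed
  have finS: "finite S" unfolding S_def using finO finU by blast
  have subS: "S \<subseteq> {1..n}" unfolding S_def using Osub sT by blast
  have clS: "\<forall>x\<in>S. orb \<pi> x \<subseteq> S"
  proof
    fix x assume "x \<in> S"
    then consider "x \<in> Ob" | a where "a \<in> Ob" "x \<in> T a" unfolding S_def by blast
    then show "orb \<pi> x \<subseteq> S"
    proof cases
      case 1 then show ?thesis using Oorb unfolding S_def by blast
    next
      case 2 then show ?thesis using cT[OF 2(1)] unfolding S_def by blast
    qed
  qed
  have setS: "set xs \<subseteq> S"
  proof -
    have "set (ins ((\<pi> ^^ k) s)) \<subseteq> S" for k using setT[OF ak[of k]] ak[of k] unfolding S_def by blast
    moreover have "(\<pi> ^^ Suc k) s \<in> S" for k using ak[of "Suc k"] unfolding S_def by blast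
    ultimately show ?thesis unfolding xs_def using sO S_def by auto
  qed
  have lo: "Sg S + dd m1 q (last (q # xs)) \<le> pl m1 q xs" for q
  proof -
    have "(\<Sum>a\<in>Ob. Sg (T a) + dd m1 a (\<pi> a)) \<le> (\<Sum>a\<in>Ob. g a)" using glo by (rule sum_mono)
    then show ?thesis unfolding plxs lastxs SgS SgO by (simp add: sum.distrib)
  qed
  have up: "pl m1 q xs + B \<le> Sg S + 2 * B * real (card (orb \<pi> ` S))" if q: "q \<in> {1..n}" for q
  proof -
    have "(\<Sum>a\<in>Ob. g a) \<le> (\<Sum>a\<in>Ob. Sg (T a) + dd m1 a (\<pi> a) + 2 * B * real (card (orb \<pi> ` T a)))"
      using gup by (rule sum_mono)
    also have "\<dots> = (\<Sum>a\<in>Ob. Sg (T a)) + Sg Ob + 2 * B * real (\<Sum>a\<in>Ob. card (orb \<pi> ` T a))"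
      unfolding SgO by (simp add: sum.distrib sum_distrib_left)
    finally have "(\<Sum>a\<in>Ob. g a) \<le> (\<Sum>a\<in>Ob. Sg (T a)) + Sg Ob + 2 * B * real (\<Sum>a\<in>Ob. card (orb \<pi> ` T a))" .
    moreover have "dd m1 q s \<le> B" using Bd[OF q sn] .
    ultimately show ?thesis unfolding plxs SgS cardOS by (simp add: algebra_simps)
  qed
  have ne: "xs \<noteq> []" unfolding xs_def by simp
  have "sw_inv \<pi> n m1 B S xs" unfolding sw_inv_def Sg_def[symmetric]
    using finS subS clS setS len lo up ne by auto
  then show ?case unfolding S_def Ob_def xs_def .
qed

definition Mis :: "nat \<Rightarrow> (nat \<Rightarrow> nat) \<Rightarrow> real" where
  "Mis n \<pi> = real (card (nontriv n \<pi>))"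
definition Kc :: "nat \<Rightarrow> (nat \<Rightarrow> nat) \<Rightarrow> real" where
  "Kc n \<pi> = real (card (orb \<pi> ` nontriv n \<pi>))"
definition Sd :: "nat \<Rightarrow> nat \<Rightarrow> (nat \<Rightarrow> nat) \<Rightarrow> real" where
  "Sd m1 n \<pi> = (\<Sum>c\<in>{1..n}. dd m1 c (\<pi> c))"

lemma Sd_nontriv:
  "Sd m1 n \<pi> = (\<Sum>c\<in>nontriv n \<pi>. dd m1 c (\<pi> c))"
proof -
  have "(\<Sum>c\<in>{1..n}. dd m1 c (\<pi> c)) = (\<Sum>c\<in>nontriv n \<pi>. dd m1 c (\<pi> c))"
    by (rule sum.mono_neutral_right) (auto simp: nontriv_def)
  then show ?thesis unfolding Sd_def .
qed

lemma switch_bounds: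
  fixes \<pi> :: "nat \<Rightarrow> nat"
  assumes perm: "\<pi> permutes {1..m1 * m2}" and P: "P \<in> switch_plans (m1 * m2) \<pi>"
    and cp: "0 \<le> cp" and ct: "0 \<le> ct" and n1: "1 \<le> m1 * m2"
  shows "cp * Mis (m1*m2) \<pi> + ct * Sd m1 (m1*m2) \<pi> \<le> JT cp ct m1 P"
    and "JT cp ct m1 P \<le> cp * (Mis (m1*m2) \<pi> + Kc (m1*m2) \<pi>)
            + ct * (Sd m1 (m1*m2) \<pi> + (2 * Kc (m1*m2) \<pi> + 1) * real (m1 + m2))"
proof -
  let ?n = "m1 * m2" and ?B = "real (m1 + m2)"
  have sw: "swseq \<pi> (nontriv ?n \<pi>) P" using P unfolding switch_plans_def by simp
  have inv: "sw_inv \<pi> ?n m1 ?B (nontriv ?n \<pi>) P"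
  proof (rule sw_main(2)[OF perm _ _ sw])
    show "0 \<le> ?B" by simp
    fix i j assume "i \<in> {1..?n}" "j \<in> {1..?n}"
    then show "dd m1 i j \<le> ?B" by (rule dd_le)
  qed
  have setP: "set P \<subseteq> nontriv ?n \<pi>"
    and len: "length P = card (nontriv ?n \<pi>) + card (orb \<pi> ` nontriv ?n \<pi>)"
    and lo: "(\<Sum>c\<in>nontriv ?n \<pi>. dd m1 c (\<pi> c)) + dd m1 1 (last (1 # P)) \<le> pl m1 1 P"
    and up: "pl m1 1 P + (if P = [] then 0 else ?B)
            \<le> (\<Sum>c\<in>nontriv ?n \<pi>. dd m1 c (\<pi> c)) + 2 * ?B * real (card (orb \<pi> ` nontriv ?n \<pi>))"
    using inv n1 unfolding sw_inv_def by auto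
  have lenr: "real (length P) = Mis ?n \<pi> + Kc ?n \<pi>" using len unfolding Mis_def Kc_def by simp
  have Kpos: "0 \<le> Kc ?n \<pi>" unfolding Kc_def by simp
  have d0: "0 \<le> dd m1 (last (1 # P)) 1" by (rule l2dist_nonneg)
  have d1: "0 \<le> dd m1 1 (last (1 # P))" by (rule l2dist_nonneg)
  have trlo: "Sd m1 ?n \<pi> \<le> pl m1 1 P + dd m1 (last (1 # P)) 1"
    using lo d0 d1 unfolding Sd_nontriv by linarith
  have lastin: "last (1 # P) \<in> {1..?n}"
  proof (cases "P = []")
    case True then show ?thesis using n1 by simp
  next
    case False
    then have "last P \<in> set P" by simp
    then have "last P \<in> {1..?n}" using setP unfolding nontriv_def by blast
    then show ?thesis using False by simp
  qed
  have trup: "pl m1 1 P + dd m1 (last (1 # P)) 1 \<le> Sd m1 ?n \<pi> + (2 * Kc ?n \<pi> + 1) * ?B"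
  proof (cases "P = []")
    case True
    have "0 \<le> (\<Sum>c\<in>nontriv ?n \<pi>. dd m1 c (\<pi> c))" by (rule sum_nonneg) (simp add: l2dist_nonneg)
    moreover have "0 \<le> (2 * Kc ?n \<pi> + 1) * ?B" using Kpos by simp
    ultimately show ?thesis using True unfolding Sd_nontriv by simp
  next
    case False
    have "dd m1 (last (1 # P)) 1 \<le> ?B" using dd_le[OF lastin] n1 by simp
    then show ?thesis using up False unfolding Sd_nontriv Kc_def by (simp add: algebra_simps)
  qed
  have Mpos: "0 \<le> Mis ?n \<pi>" unfolding Mis_def by simp
  show "cp * Mis ?n \<pi> + ct * Sd m1 ?n \<pi> \<le> JT cp ct m1 P"
    unfolding JT_eq lenr using mult_left_mono[OF trlo ct] mult_right_mono[OF _ cp, of "Mis ?n \<pi>" "Mis ?n \<pi> + Kc ?n \<pi>"] Kpos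
    by (simp add: algebra_simps)
  show "JT cp ct m1 P \<le> cp * (Mis ?n \<pi> + Kc ?n \<pi>) + ct * (Sd m1 ?n \<pi> + (2 * Kc ?n \<pi> + 1) * ?B)"
    unfolding JT_eq lenr using mult_left_mono[OF trup ct] by (simp add: algebra_simps)
qed

lemma cyc_follow_swc:
  assumes "\<pi> s \<noteq> s"
  shows "swc \<pi> (orb \<pi> s) (cyc_follow \<pi> s)"
proof -
  have "swc \<pi> (orb \<pi> s \<union> (\<Union>a\<in>orb \<pi> s. {}))
      (s # concat (map (\<lambda>k. (\<lambda>_. []) ((\<pi> ^^ k) s) @ [(\<pi> ^^ Suc k) s]) [0..<cyc_len \<pi> s]))"
    by (rule swc_cycle) (use assms swseq_nil in auto)
  then show ?thesis unfolding cyc_follow_def by simp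
qed

lemma sweep_swseq:
  assumes perm: "\<pi> permutes {1..n}"
  shows "(\<forall>s\<in>set starts. \<pi> s \<noteq> s) \<Longrightarrow> distinct (map (orb \<pi>) starts)
     \<Longrightarrow> swseq \<pi> (\<Union> (orb \<pi> ` set starts)) (concat (map (cyc_follow \<pi>) starts))"
proof (induction starts rule: rev_induct)
  case Nil
  then show ?case using swseq_nil by simp
next
  case (snoc t ts)
  have pm: "permutation \<pi>" using perm by (rule perm_of_permutes)
  have IH: "swseq \<pi> (\<Union> (orb \<pi> ` set ts)) (concat (map (cyc_follow \<pi>) ts))" using snoc by simp
  have c: "swc \<pi> (orb \<pi> t) (cyc_follow \<pi> t)" using snoc.prems by (intro cyc_follow_swc) simp
  have nd: "orb \<pi> t \<notin> orb \<pi> ` set ts" using snoc.prems by simp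
  have d: "\<Union> (orb \<pi> ` set ts) \<inter> orb \<pi> t = {}"
  proof -
    have "orb \<pi> x \<inter> orb \<pi> t = {}" if "x \<in> set ts" for x
      using orb_disj[OF pm] nd that by blast
    then show ?thesis by blast
  qed
  have "swseq \<pi> (\<Union> (orb \<pi> ` set ts) \<union> orb \<pi> t) (concat (map (cyc_follow \<pi>) ts) @ cyc_follow \<pi> t)"
    by (rule swseq_snoc[OF IH c d])
  then show ?case by (simp add: Un_commute)
qed

lemma union_orb_nontriv:
  assumes perm: "\<pi> permutes {1..n}"
  shows "\<Union> (orb \<pi> ` nontriv n \<pi>) = nontriv n \<pi>"
proof
  show "\<Union> (orb \<pi> ` nontriv n \<pi>) \<subseteq> nontriv n \<pi>" using nontriv_closed[OF perm] by blast
  show "nontriv n \<pi> \<subseteq> \<Union> (orb \<pi> ` nontriv n \<pi>)" using orb_self by blast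
qed

lemma sweep_sub_switch:
  assumes perm: "\<pi> permutes {1..n}" and P: "P \<in> sweep_plans n \<pi>"
  shows "P \<in> switch_plans n \<pi>"
proof -
  obtain starts where P: "P = concat (map (cyc_follow \<pi>) starts)"
    and a: "\<forall>s\<in>set starts. \<pi> s \<noteq> s" and b: "distinct (map (orb \<pi>) starts)"
    and c: "set (map (orb \<pi>) starts) = orb \<pi> ` nontriv n \<pi>"
    using P unfolding sweep_plans_def by blast
  have "swseq \<pi> (\<Union> (orb \<pi> ` set starts)) P" unfolding P by (rule sweep_swseq[OF perm a b])
  moreover have "\<Union> (orb \<pi> ` set starts) = nontriv n \<pi>"
    using c union_orb_nontriv[OF perm] by simp
  ultimately show ?thesis unfolding switch_plans_def by simp
qed

definition Full :: "nat \<Rightarrow> (nat \<Rightarrow> nat) \<Rightarrow> (nat \<Rightarrow> nat option) \<times> nat option" where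
  "Full n \<sigma> = (init_arr n \<sigma>, None)"
definition Hs :: "nat \<Rightarrow> (nat \<Rightarrow> nat) \<Rightarrow> nat \<Rightarrow> (nat \<Rightarrow> nat option) \<times> nat option" where
  "Hs n \<sigma> h = ((\<lambda>c. if c \<in> {1..n} \<and> c \<noteq> h then Some (\<sigma> c) else None), Some (\<sigma> h))"
definition fixo :: "(nat \<Rightarrow> nat) \<Rightarrow> nat set \<Rightarrow> nat \<Rightarrow> nat" where
  "fixo \<sigma> A = (\<lambda>c. if c \<in> A then c else \<sigma> c)"

lemma run_append: "run st (xs @ ys) = run (run st xs) ys"
  unfolding run_def by simp
lemma run_Cons: "run st (x # xs) = run (pns st x) xs"
  unfolding run_def by simp
lemma run_Nil: "run st [] = st"
  unfolding run_def by simp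

lemma pns_Full: "h \<in> {1..n} \<Longrightarrow> pns (Full n \<sigma>) h = Hs n \<sigma> h"
  unfolding pns_def Full_def Hs_def init_arr_def by (auto simp: fun_eq_iff)

lemma pns_Hs_step: "x \<in> {1..n} \<Longrightarrow> x \<noteq> h \<Longrightarrow>
   pns (Hs n \<tau> h) x = ((\<lambda>c. if c \<in> {1..n} \<and> c \<noteq> h then Some (if c = x then \<tau> h else \<tau> c) else None), Some (\<tau> x))"
  unfolding pns_def Hs_def by (auto simp: fun_eq_iff)

lemma pns_Hs_last: "h \<in> {1..n} \<Longrightarrow> \<tau> h = h \<Longrightarrow> pns (Hs n \<tau> h) h = Full n \<tau>"
  unfolding pns_def Hs_def Full_def init_arr_def by (auto simp: fun_eq_iff)

lemma cf_run:
  fixes \<sigma> :: "nat \<Rightarrow> nat"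
  assumes perm: "\<sigma> permutes {1..n}" and ns: "\<sigma> s \<noteq> s"
  shows "run (Full n \<sigma>) (cyc_follow \<sigma> s) = Full n (fixo \<sigma> (orb \<sigma> s))"
proof -
  have pm: "permutation \<sigma>" using perm by (rule perm_of_permutes)
  interpret C: cyc \<sigma> s using pm by unfold_locales
  define a where "a = (\<lambda>k. (\<sigma> ^^ k) s)"
  define \<tau> where "\<tau> = (\<lambda>k c. if c \<in> a ` {1..k} then c else if c = s then a (Suc k) else \<sigma> c)"
  have sn: "s \<in> {1..n}" using ns permutes_not_in[OF perm] by blast
  have an: "a k \<in> {1..n}" for k using orb_permutes_subset[OF perm sn] orb_funpow unfolding a_def by blast
  have aSuc: "a (Suc k) = \<sigma> (a k)" for k unfolding a_def by simp
  have ainj: "a i \<noteq> a j" if "i < C.L" "j < C.L" "i \<noteq> j" for i j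
    using inj_on_contraD[OF C.L_inj, of i j] that unfolding a_def by simp
  have a0: "a 0 = s" unfolding a_def by simp
  have sni: "s \<notin> a ` {1..k}" if "k < C.L" for k
  proof
    assume "s \<in> a ` {1..k}"
    then obtain i where "i \<in> {1..k}" "s = a i" by blast
    then show False using ainj[of 0 i] a0 that by auto
  qed
  have step: "run (Hs n \<sigma> s) (map (\<lambda>i. a (Suc i)) [0..<k]) = Hs n (\<tau> k) s" if "k < C.L" for k
    using that
  proof (induction k)
    case 0
    have "\<tau> 0 = \<sigma>" unfolding \<tau>_def using aSuc a0 by (auto simp: fun_eq_iff)
    then show ?case by (simp add: run_Nil)
  next
    case (Suc k)
    let ?x = "a (Suc k)"
    have kL: "k < C.L" using Suc.prems by simp
    have xs: "?x \<noteq> s" using ainj[of "Suc k" 0] Suc.prems a0 by simp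
    have tks: "\<tau> k s = ?x" unfolding \<tau>_def using sni[OF kL] by simp
    have xni: "?x \<notin> a ` {1..k}"
    proof
      assume "?x \<in> a ` {1..k}"
      then obtain i where "i \<in> {1..k}" "?x = a i" by blast
      then show False using ainj[of "Suc k" i] Suc.prems by auto
    qed
    have tkx: "\<tau> k ?x = a (Suc (Suc k))" unfolding \<tau>_def using xni xs aSuc by simp
    have img: "a ` {1..Suc k} = insert ?x (a ` {1..k})" using atLeastAtMostSuc_conv[of 1 k] by simp
    have "run (Hs n \<sigma> s) (map (\<lambda>i. a (Suc i)) [0..<Suc k]) = pns (Hs n (\<tau> k) s) ?x"
      using Suc.IH[OF kL] by (simp add: run_append run_Cons run_Nil)
    also have "\<dots> = Hs n (\<tau> (Suc k)) s"
      unfolding pns_Hs_step[OF an xs] tks tkx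
    proof -
      have "\<tau> (Suc k) s = a (Suc (Suc k))" unfolding \<tau>_def using sni[OF Suc.prems] by simp
      moreover have "(\<lambda>c. if c \<in> {1..n} \<and> c \<noteq> s then Some (if c = ?x then ?x else \<tau> k c) else None)
          = (\<lambda>c. if c \<in> {1..n} \<and> c \<noteq> s then Some (\<tau> (Suc k) c) else None)"
        unfolding \<tau>_def img by (auto simp: fun_eq_iff)
      ultimately show "((\<lambda>c. if c \<in> {1..n} \<and> c \<noteq> s then Some (if c = ?x then ?x else \<tau> k c) else None), Some (a (Suc (Suc k))))
          = Hs n (\<tau> (Suc k)) s" unfolding Hs_def by simp
    qed
    finally show ?case .
  qed
  have L2: "2 \<le> C.L" using C.L_ge2[OF ns] .
  define M where "M = C.L - 1"
  have hML: "M < C.L" "Suc M = C.L" unfolding M_def using L2 by auto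
  have cf: "cyc_follow \<sigma> s = s # map (\<lambda>i. a (Suc i)) [0..<M] @ [a C.L]"
  proof -
    have "[0..<C.L] = [0..<M] @ [M]" unfolding hML(2)[symmetric] by simp
    moreover have "\<sigma> ((\<sigma> ^^ M) s) = (\<sigma> ^^ C.L) s" unfolding hML(2)[symmetric] by simp
    ultimately show ?thesis unfolding cyc_follow_def a_def by simp
  qed
  have aL: "a C.L = s" unfolding a_def by (rule C.L_ret)
  have tMs: "\<tau> M s = s" unfolding \<tau>_def using sni[OF hML(1)] hML(2) aL by simp
  have "run (Full n \<sigma>) (cyc_follow \<sigma> s) = pns (run (Hs n \<sigma> s) (map (\<lambda>i. a (Suc i)) [0..<M])) s"
    unfolding cf by (simp add: run_append run_Cons run_Nil pns_Full[OF sn] aL)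
  also have "\<dots> = Full n (\<tau> M)" unfolding step[OF hML(1)] by (rule pns_Hs_last) (use sn tMs in auto)
  also have "\<tau> M = fixo \<sigma> (orb \<sigma> s)"
  proof -
    have "orb \<sigma> s = a ` {0..<C.L}" unfolding a_def using C.L_img by simp
    also have "\<dots> = insert s (a ` {1..M})"
    proof -
      have "{0..<C.L} = insert 0 {1..M}" unfolding hML(2)[symmetric] by auto
      then show ?thesis using a0 by simp
    qed
    finally have o: "orb \<sigma> s = insert s (a ` {1..M})" .
    show ?thesis unfolding \<tau>_def fixo_def o using hML(2) aL by (auto simp: fun_eq_iff)
  qed
  finally show ?thesis .
qed

lemma funpow_agree:
  assumes "\<forall>x\<in>orb \<sigma> t. \<sigma>' x = \<sigma> x"
  shows "(\<sigma>' ^^ k) t = (\<sigma> ^^ k) t"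
proof (induction k)
  case 0 then show ?case by simp
next
  case (Suc k)
  have "(\<sigma> ^^ k) t \<in> orb \<sigma> t" by (rule orb_funpow)
  then show ?case using Suc assms by simp
qed

lemma agree_cf:
  assumes "\<forall>x\<in>orb \<sigma> t. \<sigma>' x = \<sigma> x"
  shows "orb \<sigma>' t = orb \<sigma> t" "cyc_len \<sigma>' t = cyc_len \<sigma> t" "cyc_follow \<sigma>' t = cyc_follow \<sigma> t"
proof -
  note e = funpow_agree[OF assms]
  show o: "orb \<sigma>' t = orb \<sigma> t" unfolding orb_def e ..
  show l: "cyc_len \<sigma>' t = cyc_len \<sigma> t" unfolding cyc_len_def e ..
  show "cyc_follow \<sigma>' t = cyc_follow \<sigma> t" unfolding cyc_follow_def l e ..
qed

lemma fixo_permutes: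
  fixes \<sigma> :: "nat \<Rightarrow> nat"
  assumes perm: "\<sigma> permutes {1..n}"
  shows "fixo \<sigma> (orb \<sigma> t) permutes {1..n}"
proof -
  have pm: "permutation \<sigma>" using perm by (rule perm_of_permutes)
  have oo: "orb \<sigma> t = orbit \<sigma> t" using orb_eq_orbit[OF pm] .
  have eq: "fixo \<sigma> (orb \<sigma> t) = perm_restrict \<sigma> ({1..n} - orbit \<sigma> t)"
    unfolding fixo_def perm_restrict_def oo using permutes_not_in[OF perm] by (auto simp: fun_eq_iff)
  have cyc: "cyclic_on \<sigma> (orbit \<sigma> t)" using perm by (rule cyclic_on_orbit) simp
  have "perm_restrict \<sigma> ({1..n} - orbit \<sigma> t) permutes ({1..n} - orbit \<sigma> t)"
    using perm_restrict_diff_cyclic[OF perm cyc] .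
  then show ?thesis unfolding eq by (rule permutes_subset) blast
qed

lemma fixo_fixo: "fixo (fixo \<sigma> A) B = fixo \<sigma> (A \<union> B)"
  unfolding fixo_def by (auto simp: fun_eq_iff)

lemma sweep_run:
  "\<sigma> permutes {1..n} \<Longrightarrow> (\<forall>t\<in>set starts. \<sigma> t \<noteq> t) \<Longrightarrow> distinct (map (orb \<sigma>) starts) \<Longrightarrow>
   run (Full n \<sigma>) (concat (map (cyc_follow \<sigma>) starts)) = Full n (fixo \<sigma> (\<Union> (orb \<sigma> ` set starts)))"
proof (induction starts arbitrary: \<sigma>)
  case Nil
  have "fixo \<sigma> {} = \<sigma>" unfolding fixo_def by simp
  then show ?case by (simp add: run_Nil)
next
  case (Cons t ts)
  have pm: "permutation \<sigma>" using Cons.prems(1) by (rule perm_of_permutes)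
  define \<sigma>' where "\<sigma>' = fixo \<sigma> (orb \<sigma> t)"
  have p': "\<sigma>' permutes {1..n}" unfolding \<sigma>'_def using Cons.prems(1) by (rule fixo_permutes)
  have ag: "\<forall>x\<in>orb \<sigma> t'. \<sigma>' x = \<sigma> x" if t': "t' \<in> set ts" for t'
  proof -
    have "orb \<sigma> t' \<noteq> orb \<sigma> t" using Cons.prems(3) t' by auto
    then have "orb \<sigma> t' \<inter> orb \<sigma> t = {}" by (rule orb_disj[OF pm])
    then show ?thesis unfolding \<sigma>'_def fixo_def by auto
  qed
  have m1: "map (cyc_follow \<sigma>) ts = map (cyc_follow \<sigma>') ts"
    using agree_cf(3)[OF ag] by simp
  have m2: "map (orb \<sigma>) ts = map (orb \<sigma>') ts"
    using agree_cf(1)[OF ag] by simp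
  have i2: "orb \<sigma> ` set ts = orb \<sigma>' ` set ts"
    using agree_cf(1)[OF ag] by auto
  have nt: "\<forall>t'\<in>set ts. \<sigma>' t' \<noteq> t'"
  proof
    fix t' assume t': "t' \<in> set ts"
    have "\<sigma>' t' = \<sigma> t'" using ag[OF t'] orb_self[of t' \<sigma>] by blast
    then show "\<sigma>' t' \<noteq> t'" using Cons.prems(2) t' by simp
  qed
  have d': "distinct (map (orb \<sigma>') ts)" using Cons.prems(3) m2 by simp
  have c1: "run (Full n \<sigma>) (cyc_follow \<sigma> t) = Full n \<sigma>'"
    unfolding \<sigma>'_def using Cons.prems(2) by (intro cf_run[OF Cons.prems(1)]) simp
  have c2: "concat (map (cyc_follow \<sigma>) ts) = concat (map (cyc_follow \<sigma>') ts)" using m1 by (simp only:)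
  have "run (Full n \<sigma>) (concat (map (cyc_follow \<sigma>) (t # ts)))
      = run (run (Full n \<sigma>) (cyc_follow \<sigma> t)) (concat (map (cyc_follow \<sigma>) ts))"
    by (simp add: run_append)
  also have "\<dots> = run (Full n \<sigma>') (concat (map (cyc_follow \<sigma>') ts))" unfolding c1 c2 ..
  also have "\<dots> = Full n (fixo \<sigma>' (\<Union> (orb \<sigma>' ` set ts)))"
    using Cons.IH[OF p' nt d'] .
  also have "\<dots> = Full n (fixo \<sigma> (\<Union> (orb \<sigma> ` set (t # ts))))"
  proof -
    have "\<Union> (orb \<sigma>' ` set ts) = \<Union> (orb \<sigma> ` set ts)" using i2 by simp
    then show ?thesis unfolding \<sigma>'_def fixo_fixo by simp
  qed
  finally show ?case .
qed

lemma exists_valid_sweep: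
  fixes \<pi> :: "nat \<Rightarrow> nat"
  assumes perm: "\<pi> permutes {1..n}"
  shows "\<exists>P\<in>sweep_plans n \<pi>. valid_plan n \<pi> P"
proof -
  have pm: "permutation \<pi>" using perm by (rule perm_of_permutes)
  define R where "R = {s \<in> nontriv n \<pi>. \<forall>t\<in>nontriv n \<pi>. orb \<pi> t = orb \<pi> s \<longrightarrow> s \<le> t}"
  have finN: "finite (nontriv n \<pi>)" unfolding nontriv_def by simp
  have finR: "finite R" unfolding R_def using finN by simp
  define starts where "starts = sorted_list_of_set R"
  have sst: "set starts = R" unfolding starts_def using finR by simp
  have dst: "distinct starts" unfolding starts_def by simp
  have nt: "\<forall>s\<in>set starts. \<pi> s \<noteq> s" unfolding sst R_def nontriv_def by simp
  have inj: "inj_on (orb \<pi>) R"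
  proof (rule inj_onI)
    fix x y assume "x \<in> R" "y \<in> R" "orb \<pi> x = orb \<pi> y"
    then have "x \<le> y" "y \<le> x" unfolding R_def by auto
    then show "x = y" by simp
  qed
  have dmap: "distinct (map (orb \<pi>) starts)" using dst inj sst by (simp add: distinct_map)
  have img: "orb \<pi> ` R = orb \<pi> ` nontriv n \<pi>"
  proof
    show "orb \<pi> ` R \<subseteq> orb \<pi> ` nontriv n \<pi>" unfolding R_def by blast
    show "orb \<pi> ` nontriv n \<pi> \<subseteq> orb \<pi> ` R"
    proof
      fix X assume "X \<in> orb \<pi> ` nontriv n \<pi>"
      then obtain t where t: "t \<in> nontriv n \<pi>" "X = orb \<pi> t" by blast
      define U where "U = {u \<in> nontriv n \<pi>. orb \<pi> u = orb \<pi> t}"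
      have finU: "finite U" unfolding U_def using finN by simp
      have tU: "t \<in> U" unfolding U_def using t by simp
      define s where "s = Min U"
      have sU: "s \<in> U" unfolding s_def using finU tU by (intro Min_in) auto
      have smin: "s \<le> u" if "u \<in> U" for u unfolding s_def using finU that by simp
      have "s \<in> R" unfolding R_def using sU smin unfolding U_def by auto
      moreover have "orb \<pi> s = X" using sU t unfolding U_def by simp
      ultimately show "X \<in> orb \<pi> ` R" by blast
    qed
  qed
  define P where "P = concat (map (cyc_follow \<pi>) starts)"
  have sw: "P \<in> sweep_plans n \<pi>" unfolding sweep_plans_def P_def
    using nt dmap img sst by auto
  have setP: "set P \<subseteq> {1..n}"
  proof
    fix x assume "x \<in> set P"
    then obtain s where s: "s \<in> set starts" "x \<in> set (cyc_follow \<pi> s)" unfolding P_def by auto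
    have "x \<in> orb \<pi> s" using s(2) unfolding cyc_follow_def using orb_self orb_step[OF orb_funpow] by auto
    moreover have "orb \<pi> s \<subseteq> {1..n}" using s(1) sst unfolding R_def nontriv_def
      using orb_permutes_subset[OF perm] by auto
    ultimately show "x \<in> {1..n}" by blast
  qed
  have U: "\<Union> (orb \<pi> ` set starts) = nontriv n \<pi>" unfolding sst img by (rule union_orb_nontriv[OF perm])
  have "run (init_arr n \<pi>, None) P = Full n (fixo \<pi> (nontriv n \<pi>))"
    unfolding P_def Full_def[symmetric] using sweep_run[OF perm nt dmap] U by simp
  also have "\<dots> = (goal_arr n, None)"
    unfolding Full_def init_arr_def goal_arr_def fixo_def nontriv_def by (auto simp: fun_eq_iff)
  finally have "valid_plan n \<pi> P" unfolding valid_plan_def using setP by simp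
  then show ?thesis using sw by blast
qed

definition ov :: "nat \<Rightarrow> nat \<Rightarrow> nat option \<Rightarrow> real" where
  "ov m1 c v = (case v of None \<Rightarrow> 0 | Some j \<Rightarrow> dd m1 c j)"

definition Phi :: "nat \<Rightarrow> nat \<Rightarrow> (nat \<Rightarrow> nat option) \<times> nat option \<Rightarrow> nat \<Rightarrow> real" where
  "Phi n m1 st q = (\<Sum>c\<in>{1..n}. ov m1 c (fst st c)) + ov m1 q (snd st)"

lemma pns_pot:
  assumes p: "p \<in> {1..n}"
  shows "Phi n m1 (pns st p) p = Phi n m1 st p"
proof -
  obtain arr h where st: "st = (arr, h)" by fastforce
  have fin: "finite {1..n}" by simp
  have "(\<Sum>c\<in>{1..n}. ov m1 c ((arr(p := h)) c)) = ov m1 p h + (\<Sum>c\<in>{1..n} - {p}. ov m1 c (arr c))"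
    using sum.remove[OF fin p, of "\<lambda>c. ov m1 c ((arr(p := h)) c)"] by simp
  moreover have "(\<Sum>c\<in>{1..n}. ov m1 c (arr c)) = ov m1 p (arr p) + (\<Sum>c\<in>{1..n} - {p}. ov m1 c (arr c))"
    using sum.remove[OF fin p, of "\<lambda>c. ov m1 c (arr c)"] by simp
  ultimately show ?thesis unfolding Phi_def pns_def st by simp
qed

lemma move_pot: "Phi n m1 st q \<le> Phi n m1 st p + dd m1 q p"
proof (cases "snd st")
  case None then show ?thesis unfolding Phi_def ov_def by (simp add: l2dist_nonneg)
next
  case (Some j)
  have "dd m1 q j \<le> dd m1 q p + dd m1 p j" by (rule l2dist_triangle)
  then show ?thesis unfolding Phi_def ov_def Some by simp
qed

lemma run_pot:
  "set P \<subseteq> {1..n} \<Longrightarrow> Phi n m1 st q \<le> pl m1 q P + Phi n m1 (run st P) (last (q # P))"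
proof (induction P arbitrary: st q)
  case Nil then show ?case by (simp add: run_Nil)
next
  case (Cons p P)
  have p: "p \<in> {1..n}" and P: "set P \<subseteq> {1..n}" using Cons.prems by auto
  have "Phi n m1 st q \<le> Phi n m1 st p + dd m1 q p" by (rule move_pot)
  also have "Phi n m1 st p = Phi n m1 (pns st p) p" using pns_pot[OF p] by simp
  also have "\<dots> \<le> pl m1 p P + Phi n m1 (run (pns st p) P) (last (p # P))" using Cons.IH[OF P] .
  finally show ?case by (simp add: run_Cons)
qed

lemma run_untouched: "c \<notin> set P \<Longrightarrow> fst (run st P) c = fst st c"
  by (induction P arbitrary: st) (auto simp: run_Nil run_Cons pns_def)

lemma valid_lower:
  fixes \<pi> :: "nat \<Rightarrow> nat"
  assumes V: "valid_plan (m1 * m2) \<pi> P" and cp: "0 \<le> cp" and ct: "0 \<le> ct"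
  shows "cp * Mis (m1*m2) \<pi> + ct * Sd m1 (m1*m2) \<pi> \<le> JT cp ct m1 P"
proof -
  let ?n = "m1 * m2"
  have setP: "set P \<subseteq> {1..?n}" and R: "run (init_arr ?n \<pi>, None) P = (goal_arr ?n, None)"
    using V unfolding valid_plan_def by auto
  have "Phi ?n m1 (init_arr ?n \<pi>, None) 1 \<le> pl m1 1 P + Phi ?n m1 (goal_arr ?n, None) (last (1 # P))"
    using run_pot[OF setP, of m1 "(init_arr ?n \<pi>, None)" 1] R by simp
  moreover have "Phi ?n m1 (goal_arr ?n, None) x = 0" for x
    unfolding Phi_def ov_def goal_arr_def by simp
  moreover have "Phi ?n m1 (init_arr ?n \<pi>, None) 1 = Sd m1 ?n \<pi>"
    unfolding Phi_def ov_def init_arr_def Sd_def by simp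
  ultimately have tr: "Sd m1 ?n \<pi> \<le> pl m1 1 P + dd m1 (last (1 # P)) 1"
    using l2dist_nonneg[of "loc m1 (last (1 # P))" "loc m1 1"] by simp
  have sub: "nontriv ?n \<pi> \<subseteq> set P"
  proof
    fix c assume c: "c \<in> nontriv ?n \<pi>"
    show "c \<in> set P"
    proof (rule ccontr)
      assume "c \<notin> set P"
      then have "fst (run (init_arr ?n \<pi>, None) P) c = init_arr ?n \<pi> c" by (simp add: run_untouched)
      then have "goal_arr ?n c = init_arr ?n \<pi> c" using R by simp
      then show False using c unfolding nontriv_def goal_arr_def init_arr_def by auto
    qed
  qed
  have "card (nontriv ?n \<pi>) \<le> card (set P)" using sub by (intro card_mono) auto
  also have "\<dots> \<le> length P" by (rule card_length)
  finally have "Mis ?n \<pi> \<le> real (length P)" unfolding Mis_def by simp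
  then show ?thesis unfolding JT_eq
    using mult_left_mono[OF tr ct] mult_left_mono[OF _ cp, of "Mis ?n \<pi>" "real (length P)"]
    by (simp add: algebra_simps)
qed

lemma Jopt_bounds:
  fixes \<pi> :: "nat \<Rightarrow> nat"
  assumes perm: "\<pi> permutes {1..m1 * m2}" and cp: "0 \<le> cp" and ct: "0 \<le> ct" and n1: "1 \<le> m1 * m2"
  shows "cp * Mis (m1*m2) \<pi> + ct * Sd m1 (m1*m2) \<pi> \<le> Jopt cp ct m1 m2 \<pi>"
    and "Jopt cp ct m1 m2 \<pi> \<le> cp * (Mis (m1*m2) \<pi> + Kc (m1*m2) \<pi>)
            + ct * (Sd m1 (m1*m2) \<pi> + (2 * Kc (m1*m2) \<pi> + 1) * real (m1 + m2))"
proof -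
  let ?X = "JT cp ct m1 ` {P. valid_plan (m1 * m2) \<pi> P}"
  obtain P0 where P0: "P0 \<in> sweep_plans (m1*m2) \<pi>" "valid_plan (m1*m2) \<pi> P0"
    using exists_valid_sweep[OF perm] by blast
  have ne: "?X \<noteq> {}" using P0 by blast
  have lb: "\<forall>x\<in>?X. cp * Mis (m1*m2) \<pi> + ct * Sd m1 (m1*m2) \<pi> \<le> x"
    using valid_lower[OF _ cp ct] by blast
  show "cp * Mis (m1*m2) \<pi> + ct * Sd m1 (m1*m2) \<pi> \<le> Jopt cp ct m1 m2 \<pi>"
    unfolding Jopt_def using ne lb by (intro cInf_greatest) auto
  have bdd: "bdd_below ?X" using lb by (auto intro: bdd_belowI)
  have "Jopt cp ct m1 m2 \<pi> \<le> JT cp ct m1 P0"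
    unfolding Jopt_def using P0(2) bdd by (intro cInf_lower) auto
  also have "\<dots> \<le> cp * (Mis (m1*m2) \<pi> + Kc (m1*m2) \<pi>)
            + ct * (Sd m1 (m1*m2) \<pi> + (2 * Kc (m1*m2) \<pi> + 1) * real (m1 + m2))"
    using switch_bounds(2)[OF perm sweep_sub_switch[OF perm P0(1)] cp ct n1] .
  finally show "Jopt cp ct m1 m2 \<pi> \<le> cp * (Mis (m1*m2) \<pi> + Kc (m1*m2) \<pi>)
            + ct * (Sd m1 (m1*m2) \<pi> + (2 * Kc (m1*m2) \<pi> + 1) * real (m1 + m2))" .
qed

abbreviation Perms :: "nat \<Rightarrow> (nat \<Rightarrow> nat) set" where
  "Perms n \<equiv> {\<pi>. \<pi> permutes {1..n}}"

lemma fiber_le: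
  fixes S :: "'a set"
  assumes fin: "finite S" and j: "j \<in> S" and j': "j' \<in> S"
  shows "card {\<pi>. \<pi> permutes S \<and> \<pi> i = j} \<le> card {\<pi>. \<pi> permutes S \<and> \<pi> i = j'}"
proof (rule card_inj_on_le)
  let ?f = "\<lambda>\<pi>. transpose j j' \<circ> \<pi>"
  show "inj_on ?f {\<pi>. \<pi> permutes S \<and> \<pi> i = j}"
  proof (rule inj_onI)
    fix x y assume "?f x = ?f y"
    then have "transpose j j' \<circ> (transpose j j' \<circ> x) = transpose j j' \<circ> (transpose j j' \<circ> y)" by simp
    then show "x = y" by (simp add: o_assoc[symmetric] fun_eq_iff)
  qed
  show "?f ` {\<pi>. \<pi> permutes S \<and> \<pi> i = j} \<subseteq> {\<pi>. \<pi> permutes S \<and> \<pi> i = j'}"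
    using permutes_compose[OF _ permutes_swap_id[OF j j']] by auto
  show "finite {\<pi>. \<pi> permutes S \<and> \<pi> i = j'}"
    using finite_permutations[OF fin] by (rule rev_finite_subset) auto
qed

lemma fiber_card:
  fixes S :: "'a set"
  assumes fin: "finite S" and i: "i \<in> S" and j: "j \<in> S"
  shows "real (card S) * real (card {\<pi>. \<pi> permutes S \<and> \<pi> i = j}) = fact (card S)"
proof -
  let ?F = "\<lambda>j. card {\<pi>. \<pi> permutes S \<and> \<pi> i = j}"
  have eq: "?F j' = ?F j" if "j' \<in> S" for j'
    using fiber_le[OF fin that j, of i] fiber_le[OF fin j that, of i] by simp
  have U: "{\<pi>. \<pi> permutes S} = (\<Union>j'\<in>S. {\<pi>. \<pi> permutes S \<and> \<pi> i = j'})"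
  proof (intro equalityI subsetI)
    fix \<pi> assume "\<pi> \<in> {\<pi>. \<pi> permutes S}"
    then have p: "\<pi> permutes S" by simp
    then have "\<pi> i \<in> S" using permutes_in_image[OF p] i by simp
    then show "\<pi> \<in> (\<Union>j'\<in>S. {\<pi>. \<pi> permutes S \<and> \<pi> i = j'})" using p by blast
  qed blast
  have "card {\<pi>. \<pi> permutes S} = (\<Sum>j'\<in>S. ?F j')"
    unfolding U
  proof (rule card_UN_disjoint[OF fin])
    show "\<forall>j'\<in>S. finite {\<pi>. \<pi> permutes S \<and> \<pi> i = j'}"
      using finite_permutations[OF fin] by (auto elim: rev_finite_subset)
    show "\<forall>a\<in>S. \<forall>b\<in>S. a \<noteq> b \<longrightarrow> {\<pi>. \<pi> permutes S \<and> \<pi> i = a} \<inter> {\<pi>. \<pi> permutes S \<and> \<pi> i = b} = {}"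
      by auto
  qed
  also have "\<dots> = card S * ?F j" using eq by simp
  finally have "card S * ?F j = fact (card S)" using card_permutations[OF refl fin] by simp
  then have "real (card S * ?F j) = real (fact (card S))" by (simp only:)
  then show ?thesis by simp
qed

lemma sum_perm_point:
  fixes g :: "nat \<Rightarrow> real"
  assumes i: "i \<in> {1..n}"
  shows "real n * (\<Sum>\<pi>\<in>Perms n. g (\<pi> i)) = fact n * (\<Sum>j\<in>{1..n}. g j)"
proof -
  have finP: "finite (Perms n)" using finite_permutations[of "{1..n}"] by simp
  have "(\<Sum>\<pi>\<in>Perms n. g (\<pi> i)) = (\<Sum>\<pi>\<in>Perms n. \<Sum>j\<in>{1..n}. if \<pi> i = j then g j else 0)"
  proof (rule sum.cong[OF refl])
    fix \<pi> assume "\<pi> \<in> Perms n"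
    then have p: "\<pi> permutes {1..n}" by simp
    have "\<pi> i \<in> {1..n}" using permutes_in_image[OF p] i by simp
    then show "g (\<pi> i) = (\<Sum>j\<in>{1..n}. if \<pi> i = j then g j else 0)" by simp
  qed
  also have "\<dots> = (\<Sum>j\<in>{1..n}. \<Sum>\<pi>\<in>Perms n. if \<pi> i = j then g j else 0)" by (rule sum.swap)
  also have "\<dots> = (\<Sum>j\<in>{1..n}. g j * real (card {\<pi>. \<pi> permutes {1..n} \<and> \<pi> i = j}))"
  proof (rule sum.cong[OF refl])
    fix j assume j: "j \<in> {1..n}"
    have "(\<Sum>\<pi>\<in>Perms n. if \<pi> i = j then g j else 0) = (\<Sum>\<pi>\<in>{\<pi> \<in> Perms n. \<pi> i = j}. g j)"
      using sum.inter_filter[OF finP, of "\<lambda>_. g j" "\<lambda>\<pi>. \<pi> i = j"] by simp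
    also have "{\<pi> \<in> Perms n. \<pi> i = j} = {\<pi>. \<pi> permutes {1..n} \<and> \<pi> i = j}" by auto
    finally show "(\<Sum>\<pi>\<in>Perms n. if \<pi> i = j then g j else 0) = g j * real (card {\<pi>. \<pi> permutes {1..n} \<and> \<pi> i = j})"
      by simp
  qed
  finally have e: "(\<Sum>\<pi>\<in>Perms n. g (\<pi> i)) = (\<Sum>j\<in>{1..n}. g j * real (card {\<pi>. \<pi> permutes {1..n} \<and> \<pi> i = j}))" .
  have "real n * (\<Sum>\<pi>\<in>Perms n. g (\<pi> i)) = (\<Sum>j\<in>{1..n}. g j * (real n * real (card {\<pi>. \<pi> permutes {1..n} \<and> \<pi> i = j})))"
    unfolding e sum_distrib_left by (simp add: algebra_simps)
  also have "\<dots> = (\<Sum>j\<in>{1..n}. g j * fact n)"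
  proof (rule sum.cong[OF refl])
    fix j assume j: "j \<in> {1..n}"
    have "real (card {1..n}) * real (card {\<pi>. \<pi> permutes {1..n} \<and> \<pi> i = j}) = fact (card {1..n})"
      by (rule fiber_card[OF _ i j]) simp
    then show "g j * (real n * real (card {\<pi>. \<pi> permutes {1..n} \<and> \<pi> i = j})) = g j * fact n" by simp
  qed
  also have "\<dots> = fact n * (\<Sum>j\<in>{1..n}. g j)" by (simp add: sum_distrib_left mult.commute)
  finally show ?thesis .
qed

lemma div_helper: "(a::real) > 0 \<Longrightarrow> a * x = y \<Longrightarrow> x = y / a"
  by (simp add: field_simps)

lemma card_Perms: "card (Perms n) = fact n"
  using card_permutations[of "{1..n}" n] by simp

lemma E_Sd:
  assumes n1: "1 \<le> m1 * m2"
  shows "E_perm (m1 * m2) (Sd m1 (m1 * m2)) = (\<Sum>i\<in>{1..m1*m2}. \<Sum>j\<in>{1..m1*m2}. dd m1 i j) / real (m1 * m2)"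
proof -
  let ?n = "m1 * m2"
  have "(\<Sum>\<pi>\<in>Perms ?n. Sd m1 ?n \<pi>) = (\<Sum>i\<in>{1..?n}. \<Sum>\<pi>\<in>Perms ?n. dd m1 i (\<pi> i))"
    unfolding Sd_def by (rule sum.swap)
  also have "\<dots> = (\<Sum>i\<in>{1..?n}. fact ?n * (\<Sum>j\<in>{1..?n}. dd m1 i j) / real ?n)"
  proof (rule sum.cong[OF refl])
    fix i assume i: "i \<in> {1..?n}"
    have "real ?n * (\<Sum>\<pi>\<in>Perms ?n. dd m1 i (\<pi> i)) = fact ?n * (\<Sum>j\<in>{1..?n}. dd m1 i j)"
      by (rule sum_perm_point[OF i])
    moreover have "real ?n > 0" using n1 by linarith
    ultimately show "(\<Sum>\<pi>\<in>Perms ?n. dd m1 i (\<pi> i)) = fact ?n * (\<Sum>j\<in>{1..?n}. dd m1 i j) / real ?n"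
      by (intro div_helper) simp_all
  qed
  finally have "(\<Sum>\<pi>\<in>Perms ?n. Sd m1 ?n \<pi>) = fact ?n * (\<Sum>i\<in>{1..?n}. \<Sum>j\<in>{1..?n}. dd m1 i j) / real ?n"
    by (simp add: sum_distrib_left sum_divide_distrib)
  then show ?thesis unfolding E_perm_def card_Perms by simp
qed

lemma grid_sum:
  fixes F :: "nat \<Rightarrow> real"
  assumes m1: "0 < m1"
  shows "(\<Sum>i\<in>{1..m1*m2}. F i) = (\<Sum>c<m2. \<Sum>r<m1. F (c * m1 + r + 1))"
proof -
  let ?f = "\<lambda>(c, r). c * m1 + r + 1"
  let ?A = "{..<m2} \<times> {..<m1}"
  have inj: "inj_on ?f ?A"
  proof (rule inj_onI)
    fix x y assume x: "x \<in> ?A" and y: "y \<in> ?A" and e: "?f x = ?f y"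
    obtain c r where xc: "x = (c, r)" by (cases x)
    obtain c' r' where yc: "y = (c', r')" by (cases y)
    have r: "r < m1" "r' < m1" using x y xc yc by auto
    have e': "r + c * m1 = r' + c' * m1" using e xc yc by simp
    have "(r + c * m1) mod m1 = r" using r by simp
    moreover have "(r' + c' * m1) mod m1 = r'" using r by simp
    ultimately have rr: "r = r'" using e' by simp
    then have "c * m1 = c' * m1" using e' by simp
    then have "c = c'" using m1 by simp
    then show "x = y" using xc yc rr by simp
  qed
  have img: "?f ` ?A = {1..m1*m2}"
  proof
    show "?f ` ?A \<subseteq> {1..m1 * m2}"
    proof
      fix x assume "x \<in> ?f ` ?A"
      then obtain p where p: "p \<in> ?A" "x = ?f p" by (rule imageE)
      obtain c r where pc: "p = (c, r)" by (cases p)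
      have cr: "c < m2" "r < m1" "x = c * m1 + r + 1" using p pc by auto
      have "c * m1 + r + 1 \<le> c * m1 + m1" using cr by simp
      also have "\<dots> = (c + 1) * m1" by simp
      also have "\<dots> \<le> m2 * m1" using cr by (intro mult_right_mono) auto
      finally show "x \<in> {1..m1 * m2}" using cr by (simp add: mult.commute)
    qed
    show "{1..m1 * m2} \<subseteq> ?f ` ?A"
    proof
      fix i assume i: "i \<in> {1..m1*m2}"
      have "i - 1 < m2 * m1" using i by (auto simp: mult.commute)
      then have d: "(i - 1) div m1 < m2" by (rule less_mult_imp_div_less)
      have md: "(i - 1) mod m1 < m1" using m1 by simp
      have fe: "?f ((i - 1) div m1, (i - 1) mod m1) = i"
        using i div_mult_mod_eq[of "i - 1" m1] by simp
      have "((i - 1) div m1, (i - 1) mod m1) \<in> ?A" using d md by simp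
      then show "i \<in> ?f ` ?A"
        by (rule image_eqI[where f="?f" and x="((i - 1) div m1, (i - 1) mod m1)", rotated]) (use fe in simp)
    qed
  qed
  have "(\<Sum>i\<in>{1..m1*m2}. F i) = (\<Sum>x\<in>?A. F (?f x))"
    using sum.reindex[OF inj, of F] img by (simp add: comp_def)
  also have "\<dots> = (\<Sum>c<m2. \<Sum>r<m1. F (c * m1 + r + 1))"
    by (simp add: sum.cartesian_product split_def)
  finally show ?thesis .
qed

lemma loc_grid: "r < m1 \<Longrightarrow> loc m1 (Suc (c * m1 + r)) = (real (r + 1), real (c + 1))"
proof -
  assume r: "r < m1"
  have "(c * m1 + r) mod m1 = r" using r by simp
  moreover have "(c * m1 + r) div m1 = c" using r by simp
  ultimately show ?thesis unfolding loc_def by simp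
qed

lemma sum_real_less: "2 * (\<Sum>b<m. real b) = real m * (real m - 1)"
  by (induction m) (simp_all add: algebra_simps)

lemma abs_line: "2 * (\<Sum>b<m. \<bar>real m - real b\<bar>) = real m * (real m + 1)"
proof -
  have "(\<Sum>b<m. \<bar>real m - real b\<bar>) = (\<Sum>b<m. real m - real b)" by (rule sum.cong) auto
  also have "\<dots> = real m * real m - (\<Sum>b<m. real b)" by (simp add: sum_subtractf)
  finally show ?thesis using sum_real_less[of m] by (simp add: algebra_simps)
qed

lemma abs_square: "3 * (\<Sum>a<m. \<Sum>b<m. \<bar>real a - real b\<bar>) = real m ^ 3 - real m"
proof (induction m)
  case 0 then show ?case by simp
next
  case (Suc m)
  have s1: "(\<Sum>a<Suc m. \<Sum>b<Suc m. \<bar>real a - real b\<bar>)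
      = (\<Sum>a<m. \<Sum>b<m. \<bar>real a - real b\<bar>) + (\<Sum>a<m. \<bar>real a - real m\<bar>) + (\<Sum>b<m. \<bar>real m - real b\<bar>)"
    by (simp add: sum.distrib)
  have s2: "(\<Sum>a<m. \<bar>real a - real m\<bar>) = (\<Sum>b<m. \<bar>real m - real b\<bar>)"
    by (rule sum.cong) auto
  show ?case unfolding s1 s2 using Suc abs_line[of m] by (simp add: algebra_simps power3_eq_cube)
qed

lemma dd_grid_lower:
  assumes "r < m1" "r' < m1"
  shows "(\<bar>real r - real r'\<bar> + \<bar>real c - real c'\<bar>) / 2 \<le> dd m1 (c * m1 + r + 1) (c' * m1 + r' + 1)"
proof -
  have a: "\<bar>real r - real r'\<bar> \<le> dd m1 (c * m1 + r + 1) (c' * m1 + r' + 1)"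
    using l2dist_ge_fst[of "loc m1 (c * m1 + r + 1)" "loc m1 (c' * m1 + r' + 1)"] assms
    by (simp add: loc_grid)
  have b: "\<bar>real c - real c'\<bar> \<le> dd m1 (c * m1 + r + 1) (c' * m1 + r' + 1)"
    using l2dist_ge_snd[of "loc m1 (c * m1 + r + 1)" "loc m1 (c' * m1 + r' + 1)"] assms
    by (simp add: loc_grid)
  show ?thesis using a b by simp
qed

lemma quad_r: "(\<Sum>c<m2. \<Sum>r<m1. \<Sum>c'<m2. \<Sum>r'<m1. (f r r' :: real)) = real m2 * real m2 * (\<Sum>r<m1. \<Sum>r'<m1. f r r')"
proof -
  have "(\<Sum>c<m2. \<Sum>r<m1. \<Sum>c'<m2. \<Sum>r'<m1. f r r') = (\<Sum>c<m2. \<Sum>r<m1. real m2 * (\<Sum>r'<m1. f r r'))" by simp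
  also have "\<dots> = (\<Sum>c<m2. real m2 * (\<Sum>r<m1. \<Sum>r'<m1. f r r'))" by (simp only: sum_distrib_left)
  also have "\<dots> = real m2 * real m2 * (\<Sum>r<m1. \<Sum>r'<m1. f r r')" by simp
  finally show ?thesis .
qed

lemma quad_c: "(\<Sum>c<m2. \<Sum>r<m1. \<Sum>c'<m2. \<Sum>r'<m1. (g c c' :: real)) = real m1 * real m1 * (\<Sum>c<m2. \<Sum>c'<m2. g c c')"
proof -
  have "(\<Sum>c<m2. \<Sum>r<m1. \<Sum>c'<m2. \<Sum>r'<m1. g c c') = (\<Sum>c<m2. real m1 * (\<Sum>c'<m2. real m1 * g c c'))" by simp
  also have "\<dots> = (\<Sum>c<m2. real m1 * real m1 * (\<Sum>c'<m2. g c c'))" by (simp only: sum_distrib_left mult.assoc)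
  also have "\<dots> = real m1 * real m1 * (\<Sum>c<m2. \<Sum>c'<m2. g c c')" by (simp only: sum_distrib_left)
  finally show ?thesis .
qed

lemma ddsum_lower:
  assumes m1: "0 < m1"
  shows "real (m1*m2) * (real (m1*m2) - 1) * real (m1 + m2) / 6 \<le> (\<Sum>i\<in>{1..m1*m2}. \<Sum>j\<in>{1..m1*m2}. dd m1 i j)"
proof -
  define A1 where "A1 = (\<Sum>a<m1. \<Sum>b<m1. \<bar>real a - real b\<bar>)"
  define A2 where "A2 = (\<Sum>a<m2. \<Sum>b<m2. \<bar>real a - real b\<bar>)"
  have "(\<Sum>i\<in>{1..m1*m2}. \<Sum>j\<in>{1..m1*m2}. dd m1 i j)
      = (\<Sum>c<m2. \<Sum>r<m1. \<Sum>c'<m2. \<Sum>r'<m1. dd m1 (c * m1 + r + 1) (c' * m1 + r' + 1))"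
    using grid_sum[OF m1] by simp
  also have "\<dots> \<ge> (\<Sum>c<m2. \<Sum>r<m1. \<Sum>c'<m2. \<Sum>r'<m1. \<bar>real r - real r'\<bar> / 2 + \<bar>real c - real c'\<bar> / 2)"
    using dd_grid_lower by (intro sum_mono) (simp add: add_divide_distrib)
  also have "(\<Sum>c<m2. \<Sum>r<m1. \<Sum>c'<m2. \<Sum>r'<m1. \<bar>real r - real r'\<bar> / 2 + \<bar>real c - real c'\<bar> / 2)
      = (\<Sum>c<m2. \<Sum>r<m1. \<Sum>c'<m2. \<Sum>r'<m1. \<bar>real r - real r'\<bar> / 2) + (\<Sum>c<m2. \<Sum>r<m1. \<Sum>c'<m2. \<Sum>r'<m1. \<bar>real c - real c'\<bar> / 2)"
    by (simp only: sum.distrib)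
  also have "\<dots> = real m2 * real m2 * (A1 / 2) + real m1 * real m1 * (A2 / 2)"
    unfolding quad_r quad_c A1_def A2_def by (simp add: sum_divide_distrib)
  also have "\<dots> = real (m1*m2) * (real (m1*m2) - 1) * real (m1 + m2) / 6"
  proof -
    have "3 * A1 = real m1 ^ 3 - real m1" "3 * A2 = real m2 ^ 3 - real m2"
      unfolding A1_def A2_def by (rule abs_square)+
    then have a1: "A1 = (real m1 ^ 3 - real m1) / 3" and a2: "A2 = (real m2 ^ 3 - real m2) / 3" by simp_all
    show ?thesis unfolding a1 a2 by (simp add: field_simps power3_eq_cube)
  qed
  finally show ?thesis .
qed

definition Cn :: "nat \<Rightarrow> (nat \<Rightarrow> nat) \<Rightarrow> nat" where
  "Cn n \<pi> = card (orb \<pi> ` {1..n})"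

lemma K_le_C:
  "Kc n \<pi> \<le> real (Cn n \<pi>)"
proof -
  have "card (orb \<pi> ` nontriv n \<pi>) \<le> card (orb \<pi> ` {1..n})"
    by (rule card_mono) (auto simp: nontriv_def)
  then show ?thesis unfolding Kc_def Cn_def by simp
qed

lemma Cn_insert:
  fixes p :: "nat \<Rightarrow> nat"
  assumes p: "p permutes {1..n}" and b: "b \<in> {1..Suc n}"
  shows "Cn (Suc n) (transpose (Suc n) b \<circ> p) = Cn n p + (if b = Suc n then 1 else 0)"
proof -
  define a where "a = Suc n"
  have I: "{1..Suc n} = insert a {1..n}" unfolding a_def by auto
  have pa: "p a = a" using permutes_not_in[OF p] unfolding a_def by simp
  have pin: "p y \<in> {1..n}" if "y \<in> {1..n}" for y using permutes_in_image[OF p] that by simp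
  have osub: "orb p x \<subseteq> {1..n}" if "x \<in> {1..n}" for x using orb_permutes_subset[OF p that] .
  have anot: "a \<notin> Y" if "Y \<in> orb p ` {1..n}" for Y using that osub unfolding a_def by force
  have pmp: "permutation p" using p by (rule perm_of_permutes)
  show ?thesis
  proof (cases "b = Suc n")
    case True
    then have e: "transpose (Suc n) b \<circ> p = p" by simp
    have oa: "orb p a = {a}" using pa by (rule orb_fixed)
    have img: "orb p ` {1..Suc n} = insert {a} (orb p ` {1..n})" unfolding I using oa by simp
    have "{a} \<notin> orb p ` {1..n}" using anot by blast
    then have "card (orb p ` {1..Suc n}) = Suc (card (orb p ` {1..n}))" unfolding img by simp
    then show ?thesis unfolding Cn_def e using True by simp
  next
    case False
    then have bn: "b \<in> {1..n}" using b by auto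
    define \<pi> where "\<pi> = transpose a b \<circ> p"
    have ab: "a \<noteq> b" using bn unfolding a_def by simp
    have pp: "\<pi> permutes {1..Suc n}" unfolding \<pi>_def
      by (rule permutes_compose[OF permutes_subset[OF p] permutes_swap_id]) (use b in \<open>auto simp: a_def\<close>)
    have pmpi: "permutation \<pi>" using pp by (rule perm_of_permutes)
    have pia: "\<pi> a = b" unfolding \<pi>_def using pa by simp
    have piy: "\<pi> y = p y" if "p y \<noteq> a" "p y \<noteq> b" for y unfolding \<pi>_def using that by simp
    define Ob where "Ob = orb p b"
    have Obs: "Ob \<subseteq> {1..n}" unfolding Ob_def using osub[OF bn] .
    have bOb: "b \<in> Ob" unfolding Ob_def by (rule orb_self)
    have other: "orb \<pi> x = orb p x" if x: "x \<in> {1..n}" "x \<notin> Ob" for x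
    proof -
      have nb: "p y \<noteq> b" if "y \<in> orb p x" for y
      proof
        assume "p y = b"
        then have "b \<in> orb p x" using orb_step[OF that] by simp
        then have "orb p b = orb p x" by (rule orb_same[OF pmp])
        then show False using x orb_self[of x p] unfolding Ob_def by simp
      qed
      have na: "p y \<noteq> a" if "y \<in> orb p x" for y
        using pin[of y] osub[OF x(1)] that unfolding a_def by force
      have s1: "orb \<pi> x \<subseteq> orb p x"
      proof (rule orb_closed)
        show "x \<in> orb p x" by (rule orb_self)
        fix y assume y: "y \<in> orb p x"
        show "\<pi> y \<in> orb p x" using piy[OF na[OF y] nb[OF y]] orb_step[OF y] by simp
      qed
      have s2: "orb p x \<subseteq> orb \<pi> x"
      proof (rule orb_closed)
        show "x \<in> orb \<pi> x" by (rule orb_self)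
        fix y assume y: "y \<in> orb \<pi> x"
        have y': "y \<in> orb p x" using s1 y by blast
        show "p y \<in> orb \<pi> x" using piy[OF na[OF y'] nb[OF y']] orb_step[OF y] by simp
      qed
      show ?thesis using s1 s2 by blast
    qed
    have main: "orb \<pi> b = insert a Ob"
    proof
      show "orb \<pi> b \<subseteq> insert a Ob"
      proof (rule orb_closed)
        show "b \<in> insert a Ob" using bOb by simp
        fix y assume y: "y \<in> insert a Ob"
        show "\<pi> y \<in> insert a Ob"
        proof (cases "y = a")
          case True then show ?thesis using pia bOb by simp
        next
          case False
          then have yO: "y \<in> Ob" using y by simp
          have pyO: "p y \<in> Ob" using orb_step[of y p b] yO unfolding Ob_def by simp
          have "p y \<noteq> a" using pyO Obs unfolding a_def by force
          then show ?thesis using pyO unfolding \<pi>_def by (cases "p y = b") auto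
        qed
      qed
      have aib: "a \<in> orb \<pi> b"
      proof -
        have "b \<in> orb \<pi> a" using orb_step[OF orb_self[of a \<pi>]] pia by simp
        then have "orb \<pi> b = orb \<pi> a" by (rule orb_same[OF pmpi])
        then show ?thesis using orb_self[of a \<pi>] by simp
      qed
      have "Ob \<subseteq> orb \<pi> b" unfolding Ob_def
      proof (rule orb_closed)
        show "b \<in> orb \<pi> b" by (rule orb_self)
        fix y assume y: "y \<in> orb \<pi> b"
        have py: "p y = transpose a b (\<pi> y)" unfolding \<pi>_def by simp
        have piyb: "\<pi> y \<in> orb \<pi> b" using orb_step[OF y] .
        show "p y \<in> orb \<pi> b"
        proof (cases "\<pi> y = a")
          case True then show ?thesis using py orb_self[of b \<pi>] by simp
        next
          case F1: False
          show ?thesis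
          proof (cases "\<pi> y = b")
            case True then show ?thesis using py aib by simp
          next
            case False then show ?thesis using py F1 piyb by simp
          qed
        qed
      qed
      then show "insert a Ob \<subseteq> orb \<pi> b" using aib by blast
    qed
    have img: "orb \<pi> ` {1..Suc n} = insert (insert a Ob) (orb p ` {1..n} - {Ob})"
    proof
      show "orb \<pi> ` {1..Suc n} \<subseteq> insert (insert a Ob) (orb p ` {1..n} - {Ob})"
      proof
        fix Y assume "Y \<in> orb \<pi> ` {1..Suc n}"
        then obtain x where x: "x \<in> insert a {1..n}" "Y = orb \<pi> x" unfolding I by (rule imageE)
        show "Y \<in> insert (insert a Ob) (orb p ` {1..n} - {Ob})"
        proof (cases "x \<in> insert a Ob")
          case True
          then have "x \<in> orb \<pi> b" using main by simp
          then have "orb \<pi> x = orb \<pi> b" by (rule orb_same[OF pmpi])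
          then show ?thesis using x main by simp
        next
          case False
          then have xn: "x \<in> {1..n}" "x \<notin> Ob" using x by auto
          have "orb p x \<noteq> Ob" using xn(2) orb_self[of x p] by blast
          then show ?thesis using other[OF xn] x xn by blast
        qed
      qed
      show "insert (insert a Ob) (orb p ` {1..n} - {Ob}) \<subseteq> orb \<pi> ` {1..Suc n}"
      proof
        fix Y assume Y: "Y \<in> insert (insert a Ob) (orb p ` {1..n} - {Ob})"
        show "Y \<in> orb \<pi> ` {1..Suc n}"
        proof (cases "Y = insert a Ob")
          case True then show ?thesis using main b by (metis imageI)
        next
          case False
          then obtain x where x: "x \<in> {1..n}" "Y = orb p x" "Y \<noteq> Ob" using Y by blast
          have "x \<notin> Ob"
          proof
            assume "x \<in> Ob"
            then have "orb p x = Ob" unfolding Ob_def by (rule orb_same[OF pmp])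
            then show False using x by simp
          qed
          then have "Y = orb \<pi> x" using other[OF x(1)] x by simp
          moreover have "x \<in> {1..Suc n}" using x by simp
          ultimately show ?thesis by (rule rev_image_eqI[rotated])
        qed
      qed
    qed
    have notin: "insert a Ob \<notin> orb p ` {1..n} - {Ob}" using anot by blast
    have Obin: "Ob \<in> orb p ` {1..n}" unfolding Ob_def using bn by blast
    have fin: "finite (orb p ` {1..n})" by simp
    have "card (orb \<pi> ` {1..Suc n}) = Suc (card (orb p ` {1..n} - {Ob}))"
      unfolding img using notin fin by simp
    also have "\<dots> = card (orb p ` {1..n})"
      using card_Diff_singleton[OF Obin] card_gt_0_iff[of "orb p ` {1..n}"] Obin fin by auto
    finally show ?thesis unfolding Cn_def \<pi>_def a_def using False by simp
  qed
qed

lemma SC_rec: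
  "(\<Sum>\<pi>\<in>Perms (Suc n). real (Cn (Suc n) \<pi>)) = real (Suc n) * (\<Sum>\<pi>\<in>Perms n. real (Cn n \<pi>)) + fact n"
proof -
  define a where "a = Suc n"
  define X where "X = insert a {1..n}"
  define Y where "Y = Perms n"
  define h where "h = (\<lambda>(b::nat, p::nat \<Rightarrow> nat). transpose a b \<circ> p)"
  have XI: "X = {1..Suc n}" unfolding X_def a_def by auto
  have PI: "Perms (Suc n) = h ` (X \<times> Y)"
  proof -
    have "Perms (Suc n) = {p. p permutes insert a {1..n}}" unfolding XI[symmetric] X_def by simp
    also have "\<dots> = h ` {(b, p). b \<in> insert a {1..n} \<and> p \<in> {p. p permutes {1..n}}}"
      unfolding h_def by (rule permutes_insert)
    also have "{(b, p). b \<in> insert a {1..n} \<and> p \<in> {p. p permutes {1..n}}} = X \<times> Y"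
      unfolding X_def Y_def by auto
    finally show ?thesis .
  qed
  have inj: "inj_on h (X \<times> Y)"
  proof (rule inj_onI)
    fix x y assume x: "x \<in> X \<times> Y" and y: "y \<in> X \<times> Y" and e: "h x = h y"
    obtain b p where xb: "x = (b, p)" by (cases x)
    obtain c q where yc: "y = (c, q)" by (cases y)
    have p: "p permutes {1..n}" and q: "q permutes {1..n}" using x y xb yc unfolding Y_def by auto
    have pa: "p a = a" using permutes_not_in[OF p] unfolding a_def by simp
    have qa: "q a = a" using permutes_not_in[OF q] unfolding a_def by simp
    have e': "transpose a b \<circ> p = transpose a c \<circ> q" using e xb yc unfolding h_def by simp
    have "b = c" using fun_cong[OF e', of a] pa qa by simp
    then have "transpose a b \<circ> (transpose a b \<circ> p) = transpose a b \<circ> (transpose a b \<circ> q)" using e' by simp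
    then have "p = q" by (simp add: o_assoc[symmetric] fun_eq_iff)
    then show "x = y" using xb yc \<open>b = c\<close> by simp
  qed
  have finY: "finite Y" unfolding Y_def using finite_permutations[of "{1..n}"] by simp
  have "(\<Sum>\<pi>\<in>Perms (Suc n). real (Cn (Suc n) \<pi>)) = (\<Sum>x\<in>X \<times> Y. real (Cn (Suc n) (h x)))"
    unfolding PI using sum.reindex[OF inj] by (simp add: comp_def)
  also have "\<dots> = (\<Sum>(b, p)\<in>X \<times> Y. real (Cn (Suc n) (transpose a b \<circ> p)))"
    by (rule sum.cong) (auto simp: h_def)
  also have "\<dots> = (\<Sum>b\<in>X. \<Sum>p\<in>Y. real (Cn (Suc n) (transpose a b \<circ> p)))"
    by (rule sum.cartesian_product[symmetric])
  also have "\<dots> = (\<Sum>b\<in>X. \<Sum>p\<in>Y. real (Cn n p) + (if b = a then 1 else 0))"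
  proof (intro sum.cong refl)
    fix b p assume b: "b \<in> X" and p: "p \<in> Y"
    have "Cn (Suc n) (transpose (Suc n) b \<circ> p) = Cn n p + (if b = Suc n then 1 else 0)"
      using p b unfolding Y_def XI by (intro Cn_insert) auto
    then show "real (Cn (Suc n) (transpose a b \<circ> p)) = real (Cn n p) + (if b = a then 1 else 0)"
      unfolding a_def by simp
  qed
  also have "\<dots> = (\<Sum>b\<in>X. (\<Sum>p\<in>Y. real (Cn n p)) + (if b = a then real (card Y) else 0))"
  proof (rule sum.cong[OF refl])
    fix b assume "b \<in> X"
    show "(\<Sum>p\<in>Y. real (Cn n p) + (if b = a then 1 else 0)) = (\<Sum>p\<in>Y. real (Cn n p)) + (if b = a then real (card Y) else 0)"
      by (simp add: sum.distrib)
  qed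
  also have "\<dots> = real (card X) * (\<Sum>p\<in>Y. real (Cn n p)) + (\<Sum>b\<in>X. if b = a then real (card Y) else 0)"
    by (simp add: sum.distrib)
  also have "(\<Sum>b\<in>X. if b = a then real (card Y) else 0) = real (card Y)"
    unfolding X_def by simp
  also have "card X = Suc n" unfolding XI by simp
  also have "card Y = fact n" unfolding Y_def by (rule card_Perms)
  finally show ?thesis unfolding Y_def by simp
qed

lemma sqrt_step: "2 * real (Suc n) * sqrt (real n) + 1 \<le> 2 * real (Suc n) * sqrt (real (Suc n))"
proof -
  define s where "s = sqrt (real n)"
  define t where "t = sqrt (real (Suc n))"
  have s0: "0 \<le> s" unfolding s_def by simp
  have st: "s \<le> t" unfolding s_def t_def by simp
  have t1: "1 \<le> t" unfolding t_def by simp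
  have ss: "s * s = real n" unfolding s_def by simp
  have tt: "t * t = real (Suc n)" unfolding t_def by (simp del: of_nat_Suc)
  have "(t - s) * (t + s) = 1" using ss tt by (simp add: algebra_simps)
  moreover have "t + s \<le> 2 * real (Suc n)"
  proof -
    have "t \<le> t * t" using t1 by (simp add: mult_le_cancel_left1)
    then have "t + s \<le> t * t + t * t" using st by linarith
    then show ?thesis using tt by simp
  qed
  moreover have "0 \<le> t - s" using st by simp
  ultimately have "1 \<le> (t - s) * (2 * real (Suc n))"
    by (metis mult_left_mono)
  then show ?thesis unfolding s_def[symmetric] t_def[symmetric] by (simp add: algebra_simps)
qed

lemma SC_bound: "(\<Sum>\<pi>\<in>Perms n. real (Cn n \<pi>)) \<le> fact n * (2 * sqrt (real n))"
proof (induction n)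
  case 0
  have "Perms 0 = {id}" by simp
  then show ?case unfolding Cn_def by simp
next
  case (Suc n)
  have "(\<Sum>\<pi>\<in>Perms (Suc n). real (Cn (Suc n) \<pi>)) = real (Suc n) * (\<Sum>\<pi>\<in>Perms n. real (Cn n \<pi>)) + fact n"
    by (rule SC_rec)
  also have "\<dots> \<le> real (Suc n) * (fact n * (2 * sqrt (real n))) + fact n"
    using Suc.IH by (intro add_right_mono mult_left_mono) auto
  also have "\<dots> = fact n * (2 * real (Suc n) * sqrt (real n) + 1)" by (simp add: algebra_simps)
  also have "\<dots> \<le> fact n * (2 * real (Suc n) * sqrt (real (Suc n)))"
    using sqrt_step[of n] by (intro mult_left_mono) auto
  also have "\<dots> = fact (Suc n) * (2 * sqrt (real (Suc n)))" by (simp add: algebra_simps)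
  finally show ?case .
qed

lemma E_Cn: "E_perm n (\<lambda>\<pi>. real (Cn n \<pi>)) \<le> 2 * sqrt (real n)"
proof -
  have "E_perm n (\<lambda>\<pi>. real (Cn n \<pi>)) = (\<Sum>\<pi>\<in>Perms n. real (Cn n \<pi>)) / fact n"
    unfolding E_perm_def card_Perms by simp
  also have "\<dots> \<le> fact n * (2 * sqrt (real n)) / fact n"
    using SC_bound by (intro divide_right_mono) auto
  also have "\<dots> = 2 * sqrt (real n)" by simp
  finally show ?thesis .
qed

lemma fact_pos_real: "0 < (fact n :: real)" by simp

lemma E_add: "E_perm n (\<lambda>\<pi>. f \<pi> + g \<pi>) = E_perm n f + E_perm n g"
  unfolding E_perm_def by (simp add: sum.distrib add_divide_distrib)

lemma E_cmul: "E_perm n (\<lambda>\<pi>. c * f \<pi>) = c * E_perm n f"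
  unfolding E_perm_def by (simp add: sum_distrib_left[symmetric])

lemma E_const: "E_perm n (\<lambda>\<pi>. c) = c"
proof -
  have c: "card (Perms n) = fact n" by (rule card_Perms)
  show ?thesis unfolding E_perm_def sum_constant c by simp
qed

lemma E_mono: "(\<And>\<pi>. \<pi> permutes {1..n} \<Longrightarrow> f \<pi> \<le> g \<pi>) \<Longrightarrow> E_perm n f \<le> E_perm n g"
  unfolding E_perm_def card_Perms by (intro divide_right_mono sum_mono) auto

lemma ratio_core:
  fixes X Y L D :: real
  assumes "0 < L" "L \<le> X" "X \<le> L + D" "L \<le> Y" "Y \<le> L + D"
  shows "\<bar>X / Y - 1\<bar> \<le> D / L"
proof -
  have Y0: "0 < Y" using assms by linarith
  have D0: "0 \<le> D" using assms by linarith
  have "X / Y - 1 = (X - Y) / Y" using Y0 by (simp add: field_simps)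
  then have "\<bar>X / Y - 1\<bar> = \<bar>X - Y\<bar> / Y" using Y0 by simp
  also have "\<dots> \<le> D / Y" using assms Y0 by (intro divide_right_mono) auto
  also have "\<dots> \<le> D / L" using assms D0 Y0 by (intro divide_left_mono) auto
  finally show ?thesis .
qed

lemma switch_ratio:
  fixes cp ct :: real
  assumes cp: "cp > 0" and ct: "ct > 0"
    and alg: "\<forall>m1 m2 \<pi>. \<pi> permutes {1..m1 * m2} \<longrightarrow> alg m1 m2 \<pi> \<in> switch_plans (m1 * m2) \<pi>"
  shows "tends_to_one (\<lambda>m1 m2.
               E_perm (m1 * m2) (\<lambda>\<pi>. JT cp ct m1 (alg m1 m2 \<pi>)) /
               E_perm (m1 * m2) (\<lambda>\<pi>. Jopt cp ct m1 m2 \<pi>))"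
  unfolding tends_to_one_def
proof (intro allI impI)
  fix \<epsilon> :: real assume eps: "\<epsilon> > 0"
  define Q where "Q = 12 * (2 * cp + 5 * ct) / ct"
  have Q0: "Q > 0" unfolding Q_def using cp ct by simp
  define M where "M = nat \<lceil>(Q / \<epsilon>)\<^sup>2\<rceil> + 2"
  show "\<exists>M. \<forall>m1 m2. M \<le> m1 * m2 \<longrightarrow>
      \<bar>E_perm (m1 * m2) (\<lambda>\<pi>. JT cp ct m1 (alg m1 m2 \<pi>)) / E_perm (m1 * m2) (\<lambda>\<pi>. Jopt cp ct m1 m2 \<pi>) - 1\<bar> < \<epsilon>"
  proof (intro exI allI impI)
    fix m1 m2 assume Mn: "M \<le> m1 * m2"
    define n where "n = m1 * m2"
    define B where "B = real (m1 + m2)"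
    have n2: "2 \<le> n" using Mn unfolding M_def n_def by simp
    have n1: "1 \<le> m1 * m2" using n2 unfolding n_def by linarith
    have "m1 * m2 \<noteq> 0" using n1 by linarith
    then have m1p: "0 < m1" and m2p: "0 < m2" by auto
    have B1: "1 \<le> B" unfolding B_def using m1p by simp
    have nQ: "(Q / \<epsilon>)\<^sup>2 < real n"
    proof -
      have "(Q / \<epsilon>)\<^sup>2 \<le> real (nat \<lceil>(Q / \<epsilon>)\<^sup>2\<rceil>)" by linarith
      also have "\<dots> < real M" unfolding M_def by simp
      also have "\<dots> \<le> real n" using Mn unfolding n_def of_nat_le_iff .
      finally show ?thesis .
    qed
    have sq: "Q / \<epsilon> < sqrt (real n)"
    proof -
      have "sqrt ((Q / \<epsilon>)\<^sup>2) < sqrt (real n)" using nQ by (rule real_sqrt_less_mono)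
      then show ?thesis using Q0 eps by simp
    qed
    define LB where "LB = (\<lambda>\<pi>. cp * Mis n \<pi> + ct * Sd m1 n \<pi>)"
    define W where "W = (\<lambda>\<pi>. cp * real (Cn n \<pi>) + ct * ((2 * real (Cn n \<pi>) + 1) * B))"
    have UBW: "cp * (Mis n \<pi> + Kc n \<pi>) + ct * (Sd m1 n \<pi> + (2 * Kc n \<pi> + 1) * B) \<le> LB \<pi> + W \<pi>" for \<pi>
    proof -
      have K: "Kc n \<pi> \<le> real (Cn n \<pi>)" by (rule K_le_C)
      have "cp * Kc n \<pi> \<le> cp * real (Cn n \<pi>)" using K cp by simp
      moreover have "(2 * Kc n \<pi> + 1) * B \<le> (2 * real (Cn n \<pi>) + 1) * B"
        using K B1 by (intro mult_right_mono) auto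
      then have "ct * ((2 * Kc n \<pi> + 1) * B) \<le> ct * ((2 * real (Cn n \<pi>) + 1) * B)"
        using ct by simp
      ultimately show ?thesis unfolding LB_def W_def by (simp add: algebra_simps)
    qed
    define EL where "EL = E_perm n LB"
    define D where "D = cp * (2 * sqrt (real n)) + ct * ((4 * sqrt (real n) + 1) * B)"
    have EW: "E_perm n W \<le> D"
    proof -
      have Weq: "W = (\<lambda>\<pi>. (cp + 2 * ct * B) * real (Cn n \<pi>) + ct * B)"
        unfolding W_def by (auto simp: fun_eq_iff algebra_simps)
      have "E_perm n W = (cp + 2 * ct * B) * E_perm n (\<lambda>\<pi>. real (Cn n \<pi>)) + ct * B"
        unfolding Weq by (simp only: E_add E_cmul E_const)
      also have "\<dots> \<le> (cp + 2 * ct * B) * (2 * sqrt (real n)) + ct * B"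
        using E_Cn[of n] cp ct B1 by (intro add_right_mono mult_left_mono) auto
      also have "\<dots> = D" unfolding D_def by (simp add: algebra_simps)
      finally show ?thesis .
    qed
    have ESd: "real (n - 1) * B / 6 \<le> E_perm n (Sd m1 n)"
    proof -
      define S where "S = (\<Sum>i\<in>{1..n}. \<Sum>j\<in>{1..n}. dd m1 i j)"
      have e: "E_perm n (Sd m1 n) = S / real n"
        unfolding n_def S_def using E_Sd[OF n1] .
      have s: "real n * (real n - 1) * B / 6 \<le> S"
        unfolding n_def B_def S_def by (rule ddsum_lower[OF m1p])
      have np: "0 < real n" using n2 by simp
      have nE: "real n * E_perm n (Sd m1 n) = S" unfolding e using np by simp
      have nd: "real (n - 1) = real n - 1" using n2 by (simp add: of_nat_diff)
      have "real n * (real (n - 1) * B / 6) \<le> real n * E_perm n (Sd m1 n)"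
        unfolding nE nd using s by (simp add: algebra_simps)
      then show ?thesis using np by (simp add: mult_le_cancel_left_pos)
    qed
    have ELlow: "ct * (real (n - 1) * B / 6) \<le> EL"
    proof -
      have "E_perm n (\<lambda>\<pi>. ct * Sd m1 n \<pi>) \<le> EL"
        unfolding EL_def LB_def using cp by (intro E_mono) (simp add: Mis_def)
      then show ?thesis using ESd ct unfolding E_cmul by (meson mult_left_mono order_trans less_imp_le)
    qed
    have L0: "0 < ct * (real (n - 1) * B / 6)" using ct n2 B1 by simp
    have ELpos: "0 < EL" using L0 ELlow by linarith
    have a: "alg m1 m2 \<pi> \<in> switch_plans (m1 * m2) \<pi>" if "\<pi> permutes {1..n}" for \<pi>
      using alg that unfolding n_def by blast
    have cp0: "0 \<le> cp" and ct0: "0 \<le> ct" using cp ct by auto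
    have JTb: "EL \<le> E_perm n (\<lambda>\<pi>. JT cp ct m1 (alg m1 m2 \<pi>))"
              "E_perm n (\<lambda>\<pi>. JT cp ct m1 (alg m1 m2 \<pi>)) \<le> EL + D"
    proof -
      show "EL \<le> E_perm n (\<lambda>\<pi>. JT cp ct m1 (alg m1 m2 \<pi>))" unfolding EL_def
      proof (rule E_mono)
        fix \<pi> assume p: "\<pi> permutes {1..n}"
        show "LB \<pi> \<le> JT cp ct m1 (alg m1 m2 \<pi>)" unfolding LB_def
          using switch_bounds(1)[OF p[unfolded n_def] a[OF p] cp0 ct0 n1, folded n_def] .
      qed
      have "E_perm n (\<lambda>\<pi>. JT cp ct m1 (alg m1 m2 \<pi>)) \<le> E_perm n (\<lambda>\<pi>. LB \<pi> + W \<pi>)"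
      proof (rule E_mono)
        fix \<pi> assume p: "\<pi> permutes {1..n}"
        have "JT cp ct m1 (alg m1 m2 \<pi>) \<le> cp * (Mis n \<pi> + Kc n \<pi>) + ct * (Sd m1 n \<pi> + (2 * Kc n \<pi> + 1) * B)"
          using switch_bounds(2)[OF p[unfolded n_def] a[OF p] cp0 ct0 n1, folded n_def B_def] .
        then show "JT cp ct m1 (alg m1 m2 \<pi>) \<le> LB \<pi> + W \<pi>" using UBW[of \<pi>] by linarith
      qed
      then show "E_perm n (\<lambda>\<pi>. JT cp ct m1 (alg m1 m2 \<pi>)) \<le> EL + D"
        using EW unfolding E_add EL_def by simp
    qed
    have Jb: "EL \<le> E_perm n (\<lambda>\<pi>. Jopt cp ct m1 m2 \<pi>)"
             "E_perm n (\<lambda>\<pi>. Jopt cp ct m1 m2 \<pi>) \<le> EL + D"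
    proof -
      show "EL \<le> E_perm n (\<lambda>\<pi>. Jopt cp ct m1 m2 \<pi>)" unfolding EL_def
      proof (rule E_mono)
        fix \<pi> assume p: "\<pi> permutes {1..n}"
        show "LB \<pi> \<le> Jopt cp ct m1 m2 \<pi>" unfolding LB_def
          using Jopt_bounds(1)[OF p[unfolded n_def] cp0 ct0 n1, folded n_def] .
      qed
      have "E_perm n (\<lambda>\<pi>. Jopt cp ct m1 m2 \<pi>) \<le> E_perm n (\<lambda>\<pi>. LB \<pi> + W \<pi>)"
      proof (rule E_mono)
        fix \<pi> assume p: "\<pi> permutes {1..n}"
        have "Jopt cp ct m1 m2 \<pi> \<le> cp * (Mis n \<pi> + Kc n \<pi>) + ct * (Sd m1 n \<pi> + (2 * Kc n \<pi> + 1) * B)"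
          using Jopt_bounds(2)[OF p[unfolded n_def] cp0 ct0 n1, folded n_def B_def] .
        then show "Jopt cp ct m1 m2 \<pi> \<le> LB \<pi> + W \<pi>" using UBW[of \<pi>] by linarith
      qed
      then show "E_perm n (\<lambda>\<pi>. Jopt cp ct m1 m2 \<pi>) \<le> EL + D"
        using EW unfolding E_add EL_def by simp
    qed
    have R: "\<bar>E_perm n (\<lambda>\<pi>. JT cp ct m1 (alg m1 m2 \<pi>)) / E_perm n (\<lambda>\<pi>. Jopt cp ct m1 m2 \<pi>) - 1\<bar> \<le> D / EL"
      by (rule ratio_core[OF ELpos JTb Jb])
    have Dlt: "D < \<epsilon> * (ct * (real (n - 1) * B / 6))"
    proof -
      define r where "r = sqrt (real n)"
      have r1: "1 \<le> r" unfolding r_def using n2 by simp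
      have rr: "r * r = real n" unfolding r_def by simp
      have "D \<le> (2 * cp + 5 * ct) * r * B"
      proof -
        have "cp * (2 * r) \<le> cp * (2 * r) * B" using cp r1 B1 by simp
        moreover have "ct * ((4 * r + 1) * B) \<le> ct * (5 * r * B)"
          using ct r1 B1 by (intro mult_left_mono mult_right_mono) auto
        ultimately show ?thesis unfolding D_def r_def[symmetric] by (simp add: algebra_simps)
      qed
      also have "\<dots> < \<epsilon> * (ct * (real n * B / 12))"
      proof -
        have "Q < \<epsilon> * r" using sq eps unfolding r_def by (simp add: field_simps)
        then have "12 * (2 * cp + 5 * ct) < \<epsilon> * ct * r" unfolding Q_def using ct by (simp add: field_simps)
        then have "12 * (2 * cp + 5 * ct) * (r * B) < \<epsilon> * ct * r * (r * B)"
          using r1 B1 by (intro mult_strict_right_mono) auto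
        then show ?thesis using rr by (simp add: algebra_simps)
      qed
      also have "\<dots> \<le> \<epsilon> * (ct * (real (n - 1) * B / 6))"
      proof -
        have "real n / 12 \<le> real (n - 1) / 6" using n2 by (simp add: of_nat_diff)
        then have h: "real n / 12 * B \<le> real (n - 1) / 6 * B" using B1 by (intro mult_right_mono) auto
        then have "real n * B / 12 \<le> real (n - 1) * B / 6" by simp
        then show ?thesis using eps ct by (intro mult_left_mono) auto
      qed
      finally show ?thesis .
    qed
    have "D / EL < \<epsilon>"
    proof -
      have "D < \<epsilon> * EL" using Dlt ELlow eps by (meson less_le_trans mult_left_mono less_imp_le)
      then show ?thesis using ELpos by (simp add: divide_less_eq)
    qed
    with R show "\<bar>E_perm (m1 * m2) (\<lambda>\<pi>. JT cp ct m1 (alg m1 m2 \<pi>)) / E_perm (m1 * m2) (\<lambda>\<pi>. Jopt cp ct m1 m2 \<pi>) - 1\<bar> < \<epsilon>"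
      unfolding n_def by linarith
  qed
qed

theorem corollary2:
  fixes cp ct :: real
  assumes "cp > 0" and "ct > 0"
  shows "(\<forall>alg :: nat \<Rightarrow> nat \<Rightarrow> (nat \<Rightarrow> nat) \<Rightarrow> nat list.
            (\<forall>m1 m2 \<pi>. \<pi> permutes {1..m1 * m2} \<longrightarrow> alg m1 m2 \<pi> \<in> sweep_plans (m1 * m2) \<pi>) \<longrightarrow>
            tends_to_one (\<lambda>m1 m2.
               E_perm (m1 * m2) (\<lambda>\<pi>. JT cp ct m1 (alg m1 m2 \<pi>)) /
               E_perm (m1 * m2) (\<lambda>\<pi>. Jopt cp ct m1 m2 \<pi>)))
       \<and> (\<forall>alg :: nat \<Rightarrow> nat \<Rightarrow> (nat \<Rightarrow> nat) \<Rightarrow> nat list.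
            (\<forall>m1 m2 \<pi>. \<pi> permutes {1..m1 * m2} \<longrightarrow> alg m1 m2 \<pi> \<in> switch_plans (m1 * m2) \<pi>) \<longrightarrow>
            tends_to_one (\<lambda>m1 m2.
               E_perm (m1 * m2) (\<lambda>\<pi>. JT cp ct m1 (alg m1 m2 \<pi>)) /
               E_perm (m1 * m2) (\<lambda>\<pi>. Jopt cp ct m1 m2 \<pi>)))"
proof (intro conjI allI impI)
  fix alg :: "nat \<Rightarrow> nat \<Rightarrow> (nat \<Rightarrow> nat) \<Rightarrow> nat list"
  assume a: "\<forall>m1 m2 \<pi>. \<pi> permutes {1..m1 * m2} \<longrightarrow> alg m1 m2 \<pi> \<in> sweep_plans (m1 * m2) \<pi>"
  have "\<forall>m1 m2 \<pi>. \<pi> permutes {1..m1 * m2} \<longrightarrow> alg m1 m2 \<pi> \<in> switch_plans (m1 * m2) \<pi>"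
    using a sweep_sub_switch by blast
  then show "tends_to_one (\<lambda>m1 m2.
               E_perm (m1 * m2) (\<lambda>\<pi>. JT cp ct m1 (alg m1 m2 \<pi>)) /
               E_perm (m1 * m2) (\<lambda>\<pi>. Jopt cp ct m1 m2 \<pi>))"
    by (rule switch_ratio[OF assms])
next
  fix alg :: "nat \<Rightarrow> nat \<Rightarrow> (nat \<Rightarrow> nat) \<Rightarrow> nat list"
  assume a: "\<forall>m1 m2 \<pi>. \<pi> permutes {1..m1 * m2} \<longrightarrow> alg m1 m2 \<pi> \<in> switch_plans (m1 * m2) \<pi>"
  then show "tends_to_one (\<lambda>m1 m2.
               E_perm (m1 * m2) (\<lambda>\<pi>. JT cp ct m1 (alg m1 m2 \<pi>)) /
               E_perm (m1 * m2) (\<lambda>\<pi>. Jopt cp ct m1 m2 \<pi>))"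
    by (rule switch_ratio[OF assms])
qed

end
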